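(* Let $\ell$ be a generic length vector of length $n=m+3\ge4$ whose genetic code consists of a single gene $\{n,g_1,\ldots,g_k\}$ with $n>g_1>\cdots>g_k\ge1$; set $g_{k+1}=0$ and $a_i=g_i-g_{i+1}>0$. Then $R^{m-t}V_{g_{i_1}}\cdots V_{g_{i_t}}=0$ in $H^m(\overline{M}(\ell))$ for all $t<k$ and all $1\le i_1<\cdots<i_t\le k$ if and only if $a_i\equiv1\pmod{2^{\lg(2i)}}$ for all $i=1,\ldots,k$.
   Context: A generic length vector $\ell=(\ell_1,\ldots,\ell_n)$: positive reals, $\ell_1\le\cdots\le\ell_n<\ell_1+\cdots+\ell_{n-1}$, with no $S\subset[\![n]\!]=\{1,\ldots,n\}$ having $\sum_{i\in S}\ell_i=\sum_{i\notin S}\ell_i$. $\overline{M}(\ell)=\{(z_i)\in(S^1)^n:\sum\ell_iz_i=0\}/O(2)$, a closed connected $m$-manifold. $S$ is short if $\sum_{i\in S}\ell_i<\sum_{i\notin S}\ell_i$; the genetic code is the set of maximal short sets containing $n$ (genes) for the order $\{s_1,\ldots,s_p\}\le T$ iff $T$ contains distinct $t_1,\ldots,t_p$ with $s_i\le t_i$; a subgee is $S\subset[\![n-1]\!]$ with $S\cup\{n\}$ short. Cohomology has $\mathbb{Z}_2$ coefficients. By Hausmann–Knudsen, $H^*(\overline{M}(\ell))$ is generated by $R,V_1,\ldots,V_{n-1}\in H^1$ subject only to: (i) monomials of the same degree divisible by exactly the same set of $V_i$'s are equal; with $V_I=\prod_{i\in I}V_i$, the $R^{d-|I|}V_I$ span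 $H^d$; (ii) $V_I=0$ unless $I$ is a subgee; (iii) for each subgee $S$ with $|S|\ge n-2-d$, $\sum_{T}R^{d-|T|}V_T=0$ in $H^d$, summed over $T\subset[\![n-1]\!]$, $|T|\le d$, $T\cap S=\emptyset$. $\lg(x)=\lfloor\log_2x\rfloor$. *)

theory Defs
  imports Complex_Main
begin

text \<open>A length vector of length n is a function \<open>l :: nat \<Rightarrow> real\<close>, only the
values at 1..n matter.\<close>

definition generic_length_vector :: "(nat \<Rightarrow> real) \<Rightarrow> nat \<Rightarrow> bool" where
  "generic_length_vector l n \<longleftrightarrow>
     (\<forall>i\<in>{1..n}. 0 < l i) \<and>
     (\<forall>i j. 1 \<le> i \<longrightarrow> i \<le> j \<longrightarrow> j \<le> n \<longrightarrow> l i \<le> l j) \<and>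
     l n < (\<Sum>i\<in>{1..<n}. l i) \<and>
     (\<forall>S. S \<subseteq> {1..n} \<longrightarrow> (\<Sum>i\<in>S. l i) \<noteq> (\<Sum>i\<in>{1..n} - S. l i))"

definition short :: "(nat \<Rightarrow> real) \<Rightarrow> nat \<Rightarrow> nat set \<Rightarrow> bool" where
  "short l n S \<longleftrightarrow> S \<subseteq> {1..n} \<and> (\<Sum>i\<in>S. l i) < (\<Sum>i\<in>{1..n} - S. l i)"

definition set_le :: "nat set \<Rightarrow> nat set \<Rightarrow> bool" where
  "set_le S T \<longleftrightarrow> (\<exists>f. inj_on f S \<and> f ` S \<subseteq> T \<and> (\<forall>s\<in>S. s \<le> f s))"

definition genetic_code :: "(nat \<Rightarrow> real) \<Rightarrow> nat \<Rightarrow> nat set set" where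
  "genetic_code l n = {S. short l n S \<and> n \<in> S \<and>
      (\<forall>T. short l n T \<and> n \<in> T \<and> set_le S T \<longrightarrow> T = S)}"

definition subgee :: "(nat \<Rightarrow> real) \<Rightarrow> nat \<Rightarrow> nat set \<Rightarrow> bool" where
  "subgee l n S \<longleftrightarrow> S \<subseteq> {1..n-1} \<and> short l n (insert n S)"

text \<open>Modulo relation (i), the free graded commutative Z_2-algebra on R, V_1..V_{n-1}
becomes the monoid algebra whose degree-d basis consists of the monomials
\<open>R^(d-|I|) V_I\<close> with \<open>I \<subseteq> {1..n-1}\<close>, \<open>|I| \<le> d\<close>; the monomial of degree d is encoded by
the set I.  A homogeneous element of degree d is a finite Z_2-combination of such
monomials, encoded as the (finite) set of monomials with coefficient 1.\<close>

text \<open>Multiplying a homogeneous element v by the monomial J (of some degree):\<close>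
definition mono_times :: "nat set \<Rightarrow> nat set set \<Rightarrow> nat set set" where
  "mono_times J v = {U. odd (card {T\<in>v. J \<union> T = U})}"

text \<open>Homogeneous generators (degree, element) of the ideal of relations (ii), (iii).\<close>
definition HK_generators :: "(nat \<Rightarrow> real) \<Rightarrow> nat \<Rightarrow> (nat \<times> nat set set) set" where
  "HK_generators l n =
     {(card I, {I}) | I. I \<subseteq> {1..n-1} \<and> \<not> subgee l n I} \<union>
     {(d, {T. T \<subseteq> {1..n-1} \<and> T \<inter> S = {} \<and> card T \<le> d}) | S d.
         subgee l n S \<and> int (card S) \<ge> int n - 2 - int d}"

text \<open>Degree-m part of the ideal generated by these relations.\<close>
definition HK_ideal_gens :: "(nat \<Rightarrow> real) \<Rightarrow> nat \<Rightarrow> nat \<Rightarrow> nat set set set" where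
  "HK_ideal_gens l n m =
     {mono_times J v | J v d. (d, v) \<in> HK_generators l n \<and> d \<le> m \<and>
                              J \<subseteq> {1..n-1} \<and> card J \<le> m - d}"

text \<open>Z_2-span (addition = symmetric difference).\<close>
inductive_set z2_span :: "nat set set set \<Rightarrow> nat set set set" for G where
  zero: "{} \<in> z2_span G"
| add: "x \<in> z2_span G \<Longrightarrow> g \<in> G \<Longrightarrow> (x - g) \<union> (g - x) \<in> z2_span G"

text \<open>\<open>R^(d-|I|) V_I = 0\<close> in \<open>H^d(\<overline>M(l))\<close>.\<close>
definition HK_monomial_zero :: "(nat \<Rightarrow> real) \<Rightarrow> nat \<Rightarrow> nat \<Rightarrow> nat set \<Rightarrow> bool" where
  "HK_monomial_zero l n d I \<longleftrightarrow> {I} \<in> z2_span (HK_ideal_gens l n d)"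

definition lg :: "nat \<Rightarrow> nat" where
  "lg x = nat \<lfloor>log 2 (real x)\<rfloor>"

end

theory Submission
  imports Defs
begin

definition symd :: "'a set \<Rightarrow> 'a set \<Rightarrow> 'a set" where
  "symd x y = (x - y) \<union> (y - x)"

definition zsum :: "'b set \<Rightarrow> ('b \<Rightarrow> 'a set) \<Rightarrow> 'a set" where
  "zsum F h = {x. odd (card {a\<in>F. x \<in> h a})}"

lemma even_card_symd:
  assumes "finite A" "finite B"
  shows "even (card (symd A B)) \<longleftrightarrow> even (card A + card B)"
proof -
  have e: "symd A B = (A \<union> B) - (A \<inter> B)" by (auto simp: symd_def)
  have "card (symd A B) = card (A \<union> B) - card (A \<inter> B)"
    unfolding e by (rule card_Diff_subset) (use assms in auto)
  moreover have "card A + card B = card (A \<union> B) + card (A \<inter> B)"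
    using card_Un_Int[OF assms] .
  moreover have "card (A \<inter> B) \<le> card (A \<union> B)"
    by (rule card_mono) (use assms in auto)
  ultimately show ?thesis by presburger
qed

lemma fiber_parity:
  assumes "finite A"
  shows "even (card {y. odd (card {x\<in>A. f x = y})}) \<longleftrightarrow> even (card A)"
  using assms
proof (induction A rule: finite_induct)
  case empty
  then show ?case by simp
next
  case (insert a A)
  let ?O = "\<lambda>B. {y. odd (card {x\<in>B. f x = y})}"
  have finO: "finite (?O A)"
  proof (rule finite_subset[of _ "f ` A"])
    show "?O A \<subseteq> f ` A"
    proof
      fix y assume "y \<in> ?O A"
      then have "{x\<in>A. f x = y} \<noteq> {}" by (intro notI) simp
      then show "y \<in> f ` A" by auto
    qed
  qed (use insert in auto)
  have "?O (insert a A) = symd (?O A) {f a}"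
  proof -
    have c: "card {x\<in>insert a A. f x = y} = (if f a = y then Suc (card {x\<in>A. f x = y}) else card {x\<in>A. f x = y})" for y
    proof -
      have "{x\<in>insert a A. f x = y} = (if f a = y then insert a {x\<in>A. f x = y} else {x\<in>A. f x = y})"
        by auto
      then show ?thesis using insert by auto
    qed
    have "y \<in> ?O (insert a A) \<longleftrightarrow> y \<in> symd (?O A) {f a}" for y
      by (simp only: symd_def mem_Collect_eq Un_iff Diff_iff c) (auto split: if_splits)
    then show ?thesis by blast
  qed
  then have "even (card (?O (insert a A))) \<longleftrightarrow> even (card (?O A) + 1)"
    using even_card_symd[OF finO, of "{f a}"] by simp
  then show ?case using insert by simp
qed

lemma sum_parity_card:
  assumes "finite Y"
  shows "even (\<Sum>y\<in>Y. (c y::nat)) \<longleftrightarrow> even (card {y\<in>Y. odd (c y)})"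
  using assms
proof (induction Y rule: finite_induct)
  case empty then show ?case by simp
next
  case (insert a Y)
  have "{y\<in>insert a Y. odd (c y)} = (if odd (c a) then insert a {y\<in>Y. odd (c y)} else {y\<in>Y. odd (c y)})"
    by auto
  then show ?case using insert by auto
qed

lemma card_between:
  assumes "finite x" "U \<subseteq> x"
  shows "card {V. U \<subseteq> V \<and> V \<subseteq> x} = 2 ^ card (x - U)"
proof -
  have "{V. U \<subseteq> V \<and> V \<subseteq> x} = (\<lambda>W. W \<union> U) ` Pow (x - U)"
  proof
    show "{V. U \<subseteq> V \<and> V \<subseteq> x} \<subseteq> (\<lambda>W. W \<union> U) ` Pow (x - U)"
    proof
      fix V assume "V \<in> {V. U \<subseteq> V \<and> V \<subseteq> x}"
      then have "V = (V - U) \<union> U" "V - U \<in> Pow (x - U)" by auto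
      then show "V \<in> (\<lambda>W. W \<union> U) ` Pow (x - U)" by blast
    qed
  qed (use assms in auto)
  moreover have "inj_on (\<lambda>W. W \<union> U) (Pow (x - U))"
    by (rule inj_onI) auto
  ultimately have "card {V. U \<subseteq> V \<and> V \<subseteq> x} = card (Pow (x - U))"
    by (simp add: card_image)
  also have "\<dots> = 2 ^ card (x - U)" using assms by (simp add: card_Pow)
  finally show ?thesis .
qed

lemma zsum_insert:
  assumes "finite F" "a \<notin> F"
  shows "zsum (insert a F) h = symd (h a) (zsum F h)"
proof -
  have c: "card {b\<in>insert a F. x \<in> h b} = (if x \<in> h a then Suc (card {b\<in>F. x \<in> h b}) else card {b\<in>F. x \<in> h b})" for x
  proof -
    have "{b\<in>insert a F. x \<in> h b} = (if x \<in> h a then insert a {b\<in>F. x \<in> h b} else {b\<in>F. x \<in> h b})"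
      by auto
    then show ?thesis using assms by auto
  qed
  have "x \<in> zsum (insert a F) h \<longleftrightarrow> x \<in> symd (h a) (zsum F h)" for x
    by (simp only: zsum_def symd_def mem_Collect_eq Un_iff Diff_iff c) (auto split: if_splits)
  then show ?thesis by blast
qed

lemma zsum_symd:
  assumes "finite F"
  shows "zsum F (\<lambda>a. symd (h1 a) (h2 a)) = symd (zsum F h1) (zsum F h2)"
proof -
  have "odd (card {a\<in>F. x \<in> symd (h1 a) (h2 a)}) \<longleftrightarrow>
        (odd (card {a\<in>F. x \<in> h1 a}) \<noteq> odd (card {a\<in>F. x \<in> h2 a}))" for x
  proof -
    have e: "{a\<in>F. x \<in> symd (h1 a) (h2 a)} = symd {a\<in>F. x \<in> h1 a} {a\<in>F. x \<in> h2 a}"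
      by (auto simp: symd_def)
    show ?thesis unfolding e using even_card_symd[of "{a\<in>F. x \<in> h1 a}" "{a\<in>F. x \<in> h2 a}"] assms
      by auto
  qed
  then show ?thesis unfolding zsum_def symd_def by auto
qed

lemma zsum_const:
  "zsum F (\<lambda>a. if Q a then c else {}) = (if odd (card {a\<in>F. Q a}) then c else {})"
proof -
  have "{a\<in>F. x \<in> (if Q a then c else {})} = (if x \<in> c then {a\<in>F. Q a} else {})" for x
    by auto
  then show ?thesis unfolding zsum_def by auto
qed

locale hk =
  fixes l :: "nat \<Rightarrow> real" and n m :: nat
  assumes glv: "generic_length_vector l n" and nm: "n = m + 3"
begin

lemma lpos: "i \<in> {1..n} \<Longrightarrow> 0 < l i"
  using glv unfolding generic_length_vector_def by auto

lemma lmono: "1 \<le> i \<Longrightarrow> i \<le> j \<Longrightarrow> j \<le> n \<Longrightarrow> l i \<le> l j"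
  using glv unfolding generic_length_vector_def by auto

lemma subgee_sub: "subgee l n V \<Longrightarrow> V \<subseteq> {1..n-1}"
  unfolding subgee_def by auto

lemma subgee_fin: "subgee l n V \<Longrightarrow> finite V"
  using subgee_sub finite_subset by blast

lemma subgee_notn: "subgee l n V \<Longrightarrow> n \<notin> V"
  using subgee_sub nm by fastforce

lemma lnonneg: "x \<in> A \<Longrightarrow> A \<subseteq> {1..n} \<Longrightarrow> 0 \<le> l x"
  using lpos[of x] by auto

lemma sum_nonneg_l: "A \<subseteq> {1..n} \<Longrightarrow> 0 \<le> sum l A"
  by (rule sum_nonneg) (use lnonneg in blast)

lemma sum_mono_l: "finite B \<Longrightarrow> A \<subseteq> B \<Longrightarrow> B \<subseteq> {1..n} \<Longrightarrow> sum l A \<le> sum l B"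
  by (rule sum_mono2) (use lnonneg in auto)

lemma subgee_down:
  assumes "subgee l n V" "U \<subseteq> V"
  shows "subgee l n U"
proof -
  have V1: "V \<subseteq> {1..n-1}" using assms subgee_sub by blast
  have sV: "sum l (insert n V) < sum l ({1..n} - insert n V)"
    using assms(1) unfolding subgee_def short_def by auto
  have iV: "insert n V \<subseteq> {1..n}" using V1 nm by auto
  have a: "sum l (insert n U) \<le> sum l (insert n V)"
    by (rule sum_mono_l) (use V1 assms(2) iV in \<open>auto intro: finite_subset\<close>)
  have b: "sum l ({1..n} - insert n V) \<le> sum l ({1..n} - insert n U)"
    by (rule sum_mono_l) (use assms(2) in auto)
  show ?thesis unfolding subgee_def short_def
    using a b sV V1 assms(2) nm by auto
qed

lemma subgee_card:
  assumes "subgee l n V"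
  shows "card V \<le> m"
proof (rule ccontr)
  assume "\<not> card V \<le> m"
  then have cV: "card V \<ge> m + 1" by simp
  have V1: "V \<subseteq> {1..n-1}" using assms subgee_sub by blast
  have fV: "finite V" using V1 finite_subset by blast
  have nV: "n \<notin> V" using V1 nm by auto
  have sV: "sum l (insert n V) < sum l ({1..n} - insert n V)"
    using assms(1) unfolding subgee_def short_def by auto
  have Ceq: "{1..n} - insert n V = {1..n-1} - V" using nm by auto
  have cC: "card ({1..n-1} - V) \<le> 1"
    using card_Diff_subset[OF fV V1] cV nm by simp
  have "V \<subseteq> {1..n}" using V1 by force
  then have "0 \<le> sum l V" by (rule sum_nonneg_l)
  then have ge: "l n \<le> sum l (insert n V)"
    using fV nV by simp
  have ln: "0 < l n" using lpos nm by auto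
  show False
  proof (cases "{1..n-1} - V = {}")
    case True
    then have "sum l ({1..n-1} - V) = 0" by (simp only: sum.empty)
    then show ?thesis using sV Ceq ge ln by simp
  next
    case False
    then obtain j where j: "j \<in> {1..n-1} - V" by blast
    have "{1..n-1} - V = {j}"
      using cC j card_le_Suc0_iff_eq[of "{1..n-1} - V"] by auto
    moreover have "l j \<le> l n" using j lmono nm by auto
    ultimately show ?thesis using sV Ceq ge by auto
  qed
qed

lemma subgee_union:
  assumes "subgee l n V" "subgee l n S"
  shows "card (V \<union> S) \<le> m + 1"
proof (rule ccontr)
  assume "\<not> card (V \<union> S) \<le> m + 1"
  then have c: "card (V \<union> S) \<ge> card {1..n-1}" using nm by simp
  have V1: "V \<subseteq> {1..n-1}" and S1: "S \<subseteq> {1..n-1}" using assms subgee_sub by blast+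
  have fV: "finite V" and fS: "finite S" using V1 S1 finite_subset by blast+
  have eq: "V \<union> S = {1..n-1}"
    using card_subset_eq[of "{1..n-1}" "V \<union> S"] c V1 S1 card_mono[of "{1..n-1}" "V \<union> S"] by auto
  have nV: "n \<notin> V" and nS: "n \<notin> S" using V1 S1 nm by auto
  have sV: "sum l (insert n V) < sum l ({1..n} - insert n V)"
    using assms(1) unfolding subgee_def short_def by auto
  have sS: "sum l (insert n S) < sum l ({1..n} - insert n S)"
    using assms(2) unfolding subgee_def short_def by auto
  have d1: "{1..n} - insert n V \<subseteq> S" using eq nm by auto
  have d2: "{1..n} - insert n S \<subseteq> V" using eq nm by auto
  have m1: "sum l ({1..n} - insert n V) \<le> sum l S"
    by (rule sum_mono_l) (use fS d1 S1 nm in auto)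
  have m2: "sum l ({1..n} - insert n S) \<le> sum l V"
    by (rule sum_mono_l) (use fV d2 V1 nm in auto)
  have ln: "0 < l n" using lpos nm by auto
  show False using sV sS m1 m2 ln fV fS nV nS by simp
qed

lemma finite_subgees: "finite {V. subgee l n V}"
  by (rule finite_subset[of _ "Pow {1..n-1}"]) (use subgee_sub in auto)

end

lemma span_add:
  assumes "x \<in> z2_span G" "y \<in> z2_span G"
  shows "symd x y \<in> z2_span G"
  using assms(2)
proof (induction y rule: z2_span.induct)
  case zero
  then show ?case using assms(1) by (simp add: symd_def)
next
  case (add y g)
  have "symd x ((y - g) \<union> (g - y)) = (symd x y - g) \<union> (g - symd x y)"
    by (auto simp: symd_def)
  then show ?case using z2_span.add[OF add.IH add.hyps(2)] by simp
qed

lemma gen_in: "g \<in> G \<Longrightarrow> g \<in> z2_span G"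
  using z2_span.add[OF z2_span.zero, of g G] by simp

lemma zsum_in:
  assumes "finite F" "\<forall>a\<in>F. h a \<in> z2_span G"
  shows "zsum F h \<in> z2_span G"
  using assms
proof (induction F rule: finite_induct)
  case empty
  then show ?case by (simp add: zsum_def z2_span.zero)
next
  case (insert a F)
  then show ?case by (simp add: zsum_insert span_add)
qed

lemma set_in_span:
  assumes "finite x" "\<forall>U\<in>x. {U} \<in> z2_span G"
  shows "x \<in> z2_span G"
  using assms
proof (induction x rule: finite_induct)
  case empty
  then show ?case by (simp add: z2_span.zero)
next
  case (insert U x)
  have "insert U x = symd {U} x" using insert by (auto simp: symd_def)
  moreover have "{U} \<in> z2_span G" "x \<in> z2_span G" using insert by auto
  ultimately show ?case using span_add by metis
qed

context hk
begin

abbreviation PP where "PP \<equiv> z2_span (HK_ideal_gens l n m)"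

definition Wset :: "nat set \<Rightarrow> nat set set" where
  "Wset V = {U. V \<subseteq> U \<and> U \<subseteq> {1..n-1} \<and> card U \<le> m}"

lemma W_step:
  assumes sg: "subgee l n (insert s V)" and sV: "s \<notin> V"
  shows "symd (Wset V) (Wset (insert s V)) \<in> PP"
proof -
  let ?S = "insert s V"
  have fV: "finite V" using subgee_fin[OF sg] by simp
  have cS: "card ?S \<le> m" by (rule subgee_card[OF sg])
  have cSV: "card ?S = Suc (card V)" using fV sV by simp
  have S1: "?S \<subseteq> {1..n-1}" using subgee_sub[OF sg] .
  then have V1: "V \<subseteq> {1..n-1}" by auto
  define d where "d = m - card V"
  define v where "v = {T. T \<subseteq> {1..n-1} \<and> T \<inter> ?S = {} \<and> card T \<le> d}"
  have "int (card ?S) \<ge> int n - 2 - int d" using cSV cS d_def nm by simp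
  then have gen: "(d, v) \<in> HK_generators l n"
    unfolding HK_generators_def v_def using sg by blast
  have key: "{T\<in>v. V \<union> T = U} = (if V \<subseteq> U \<and> U \<subseteq> {1..n-1} \<and> s \<notin> U \<and> card U \<le> m then {U - V} else {})" for U
  proof (cases "V \<subseteq> U \<and> U \<subseteq> {1..n-1} \<and> s \<notin> U \<and> card U \<le> m")
    case True
    have fU: "finite U" using True finite_subset by blast
    have "card (U - V) = card U - card V" using card_Diff_subset[OF fV] True by simp
    then have "U - V \<in> v" using True d_def unfolding v_def by auto
    moreover have "T = U - V" if "T \<in> v" "V \<union> T = U" for T
      using that unfolding v_def by auto
    ultimately show ?thesis using True by auto
  next
    case False
    have False if T: "T \<in> v" "V \<union> T = U" for T
    proof -
      have T1: "T \<subseteq> {1..n-1}" "T \<inter> ?S = {}" "card T \<le> d" using T(1) unfolding v_def by auto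
      have "card U \<le> card V + card T" using T(2) card_Un_le by blast
      then have "card U \<le> m" using T1 d_def cS cSV by simp
      then show False using False T(2) T1 V1 sV by auto
    qed
    then show ?thesis using False by auto
  qed
  have mt: "mono_times V v = symd (Wset V) (Wset ?S)"
  proof -
    have "U \<in> mono_times V v \<longleftrightarrow> U \<in> symd (Wset V) (Wset ?S)" for U
    proof -
      have "U \<in> mono_times V v \<longleftrightarrow> (V \<subseteq> U \<and> U \<subseteq> {1..n-1} \<and> s \<notin> U \<and> card U \<le> m)"
        unfolding mono_times_def using key[of U] by auto
      also have "\<dots> \<longleftrightarrow> U \<in> symd (Wset V) (Wset ?S)"
        unfolding symd_def Wset_def by auto
      finally show ?thesis .
    qed
    then show ?thesis by blast
  qed
  have "mono_times V v \<in> HK_ideal_gens l n m"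
    unfolding HK_ideal_gens_def using gen V1 d_def cS cSV by force
  then show ?thesis using mt gen_in by metis
qed

lemma W_chain_aux:
  "finite V \<Longrightarrow> subgee l n V \<Longrightarrow> symd (Wset V) (Wset {}) \<in> PP"
proof (induction V rule: finite_induct)
  case empty
  then show ?case by (simp add: symd_def z2_span.zero)
next
  case (insert s F)
  have "subgee l n F" using subgee_down[OF insert.prems] by auto
  then have a: "symd (Wset F) (Wset {}) \<in> PP" using insert.IH by simp
  have b: "symd (Wset F) (Wset (insert s F)) \<in> PP" using W_step[OF insert.prems insert.hyps(2)] .
  have "symd (symd (Wset F) (Wset (insert s F))) (symd (Wset F) (Wset {})) = symd (Wset (insert s F)) (Wset {})"
    by (auto simp: symd_def)
  then show ?case using span_add[OF b a] by simp
qed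

lemma W_chain: "subgee l n V \<Longrightarrow> symd (Wset V) (Wset {}) \<in> PP"
  using W_chain_aux subgee_fin by blast

lemma single_nonsg:
  assumes "U \<subseteq> {1..n-1}" "card U \<le> m" "\<not> subgee l n U"
  shows "{U} \<in> PP"
proof -
  have gen: "(card U, {U}) \<in> HK_generators l n"
    unfolding HK_generators_def using assms by blast
  have mt: "mono_times {} {U} = {U}"
  proof -
    have "{T\<in>{U}. {} \<union> T = U'} = (if U = U' then {U} else {})" for U' by auto
    then show ?thesis unfolding mono_times_def by auto
  qed
  have "mono_times {} {U} \<in> HK_ideal_gens l n m"
    unfolding HK_ideal_gens_def using gen assms by force
  then show ?thesis using mt gen_in by metis
qed

lemma finite_Wset: "finite (Wset V)"
  by (rule finite_subset[of _ "Pow {1..n-1}"]) (auto simp: Wset_def)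

lemma W_nonsg:
  assumes "\<not> subgee l n V"
  shows "Wset V \<in> PP"
proof (rule set_in_span[OF finite_Wset], intro ballI)
  fix U assume U: "U \<in> Wset V"
  then have "\<not> subgee l n U" using assms subgee_down unfolding Wset_def by blast
  then show "{U} \<in> PP" using single_nonsg U unfolding Wset_def by auto
qed

lemma key_span:
  assumes U1: "U \<subseteq> {1..n-1}" and cU: "card U \<le> m"
    and ev: "even (card {V. subgee l n V \<and> U \<subseteq> V})"
  shows "{U} \<in> PP"
proof -
  define A where "A = {V. U \<subseteq> V \<and> V \<subseteq> {1..n-1} \<and> card V \<le> m}"
  have fA: "finite A" unfolding A_def by (rule finite_subset[of _ "Pow {1..n-1}"]) auto
  define h where "h V = symd (Wset V) (if subgee l n V then Wset {} else {})" for V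
  have hin: "\<forall>V\<in>A. h V \<in> PP"
  proof
    fix V assume "V \<in> A"
    show "h V \<in> PP"
    proof (cases "subgee l n V")
      case True
      then show ?thesis using W_chain unfolding h_def by simp
    next
      case False
      then show ?thesis using W_nonsg unfolding h_def by (simp add: symd_def)
    qed
  qed
  have z1: "zsum A h \<in> PP" by (rule zsum_in[OF fA hin])
  have z2: "zsum A Wset = {U}"
  proof -
    have "x \<in> zsum A Wset \<longleftrightarrow> x = U" for x
    proof (cases "x \<subseteq> {1..n-1} \<and> card x \<le> m \<and> U \<subseteq> x")
      case True
      have fx: "finite x" using True finite_subset by blast
      have "{V\<in>A. x \<in> Wset V} = {V. U \<subseteq> V \<and> V \<subseteq> x}"
        unfolding A_def Wset_def using True by (auto intro: order.trans[OF card_mono[OF fx]])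
      then have "card {V\<in>A. x \<in> Wset V} = 2 ^ card (x - U)"
        using card_between[OF fx] True by simp
      moreover have "card (x - U) = 0 \<longleftrightarrow> x = U" using True fx by auto
      ultimately show ?thesis unfolding zsum_def by auto
    next
      case False
      have "{V\<in>A. x \<in> Wset V} = {}"
        unfolding A_def Wset_def using False by auto
      then have "x \<notin> zsum A Wset" unfolding zsum_def by (simp only: mem_Collect_eq card.empty) simp
      moreover have "x \<noteq> U" using False U1 cU by auto
      ultimately show ?thesis by simp
    qed
    then show ?thesis by blast
  qed
  have "{V\<in>A. subgee l n V} = {V. subgee l n V \<and> U \<subseteq> V}"
    unfolding A_def using subgee_sub subgee_card by blast
  then have z3: "zsum A (\<lambda>V. if subgee l n V then Wset {} else {}) = {}"
    using zsum_const[of A "subgee l n" "Wset {}"] ev by simp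
  have "zsum A h = symd (zsum A Wset) (zsum A (\<lambda>V. if subgee l n V then Wset {} else {}))"
    unfolding h_def by (rule zsum_symd[OF fA])
  then have "zsum A h = {U}" using z2 z3 by (simp add: symd_def)
  then show ?thesis using z1 by simp
qed

end

context hk
begin

definition psi :: "nat set set \<Rightarrow> nat" where
  "psi x = (\<Sum>V\<in>{V. subgee l n V}. card {U\<in>x. U \<subseteq> V})"

lemma psi_gen:
  assumes "g \<in> HK_ideal_gens l n m"
  shows "even (psi g)"
proof -
  obtain J v d where g: "g = mono_times J v" and gen: "(d, v) \<in> HK_generators l n"
    and dm: "d \<le> m" and J1: "J \<subseteq> {1..n-1}" and cJ: "card J \<le> m - d"
    using assms unfolding HK_ideal_gens_def by blast
  let ?SG = "{V. subgee l n V}"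
  have step1: "even (card {U\<in>g. U \<subseteq> V} + card {T\<in>v. J \<union> T \<subseteq> V})" if V: "subgee l n V" for V
  proof -
    let ?A = "{T\<in>v. J \<union> T \<subseteq> V}"
    have fA: "finite ?A" by (rule finite_subset[of _ "Pow V"]) (use subgee_fin[OF V] in auto)
    have e: "{y. odd (card {x\<in>?A. J \<union> x = y})} = {U\<in>g. U \<subseteq> V}"
    proof -
      have fib: "{x\<in>?A. J \<union> x = y} = (if y \<subseteq> V then {T\<in>v. J \<union> T = y} else {})" for y
        by auto
      have "odd (card {x\<in>?A. J \<union> x = y}) \<longleftrightarrow> (y \<in> g \<and> y \<subseteq> V)" for y
      proof (cases "y \<subseteq> V")
        case True
        then show ?thesis unfolding fib g mono_times_def by simp
      next
        case False
        then show ?thesis unfolding fib by simp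
      qed
      then show ?thesis by blast
    qed
    show ?thesis using fiber_parity[OF fA, of "\<lambda>T. J \<union> T"] e by simp
  qed
  from gen consider (ii) I where "d = card I" "v = {I}" "I \<subseteq> {1..n-1}" "\<not> subgee l n I"
    | (iii) S where "v = {T. T \<subseteq> {1..n-1} \<and> T \<inter> S = {} \<and> card T \<le> d}" "subgee l n S"
         "int (card S) \<ge> int n - 2 - int d"
    unfolding HK_generators_def by blast
  then have step2: "even (\<Sum>V\<in>?SG. card {T\<in>v. J \<union> T \<subseteq> V})"
  proof cases
    case ii
    have "card {T\<in>v. J \<union> T \<subseteq> V} = 0" if "V \<in> ?SG" for V
    proof -
      have "\<not> (I \<subseteq> V)" using that ii(4) subgee_down[of V I] by auto
      then have "{T\<in>v. J \<union> T \<subseteq> V} = {}" using ii(2) by auto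
      then show ?thesis by (metis card.empty)
    qed
    then show ?thesis by simp
  next
    case iii
    have cSd: "card S + d \<ge> m + 1" using iii(3) nm by linarith
    have cJS: "card J < card S" using cSd cJ dm by linarith
    have fS: "finite S" using subgee_fin[OF iii(2)] .
    have tm: "even (card {T\<in>v. J \<union> T \<subseteq> V} + (if J \<subseteq> V \<and> V \<subseteq> S then 1 else 0))"
      if V: "V \<in> ?SG" for V
    proof -
      have sV: "subgee l n V" using V by simp
      have fV: "finite V" using subgee_fin[OF sV] .
      have "card (V \<union> S) = card (V - S) + card S"
      proof -
        have "V \<union> S = (V - S) \<union> S" by auto
        then show ?thesis using card_Un_disjoint[of "V - S" S] fV fS by auto
      qed
      then have cVS: "card (V - S) \<le> d" using subgee_union[OF sV iii(2)] cSd by linarith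
      show ?thesis
      proof (cases "J \<subseteq> V")
        case True
        have "{T\<in>v. J \<union> T \<subseteq> V} = Pow (V - S)"
        proof
          show "{T\<in>v. J \<union> T \<subseteq> V} \<subseteq> Pow (V - S)" using iii(1) by auto
          show "Pow (V - S) \<subseteq> {T\<in>v. J \<union> T \<subseteq> V}"
          proof
            fix T assume T: "T \<in> Pow (V - S)"
            then have "card T \<le> card (V - S)" using fV by (auto intro: card_mono)
            then show "T \<in> {T\<in>v. J \<union> T \<subseteq> V}"
              using T True cVS iii(1) subgee_sub[OF sV] by auto
          qed
        qed
        then have c: "card {T\<in>v. J \<union> T \<subseteq> V} = 2 ^ card (V - S)"
          using fV by (simp add: card_Pow)
        show ?thesis
        proof (cases "V \<subseteq> S")
          case True
          then have "V - S = {}" by auto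
          then have "card (V - S) = 0" by (metis card.empty)
          then show ?thesis using c \<open>J \<subseteq> V\<close> True by simp
        next
          case False
          then have "card (V - S) \<noteq> 0" using fV by auto
          then show ?thesis using c False by simp
        qed
      next
        case False
        then have "{T\<in>v. J \<union> T \<subseteq> V} = {}" by auto
        then show ?thesis using False by simp
      qed
    qed
    have ind: "even (\<Sum>V\<in>?SG. (if J \<subseteq> V \<and> V \<subseteq> S then 1 else 0::nat))"
    proof -
      have "(\<Sum>V\<in>?SG. (if J \<subseteq> V \<and> V \<subseteq> S then 1 else 0::nat)) = card {V\<in>?SG. J \<subseteq> V \<and> V \<subseteq> S}"
        using sum.inter_filter[OF finite_subgees, of "\<lambda>_. (1::nat)" "\<lambda>V. J \<subseteq> V \<and> V \<subseteq> S"] by simp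
      also have "{V\<in>?SG. J \<subseteq> V \<and> V \<subseteq> S} = {V. J \<subseteq> V \<and> V \<subseteq> S}"
        using subgee_down[OF iii(2)] by auto
      finally have e: "(\<Sum>V\<in>?SG. (if J \<subseteq> V \<and> V \<subseteq> S then 1 else 0::nat)) = card {V. J \<subseteq> V \<and> V \<subseteq> S}" .
      show ?thesis
      proof (cases "J \<subseteq> S")
        case True
        have fJ: "finite J" using J1 finite_subset by blast
        have "S - J \<noteq> {}"
        proof
          assume "S - J = {}"
          then have "S \<subseteq> J" by blast
          then have "card S \<le> card J" using fJ card_mono by blast
          then show False using cJS by simp
        qed
        then have "card (S - J) \<noteq> 0" using fS by simp
        then show ?thesis using e card_between[OF fS True] by simp
      next
        case False
        then have "{V. J \<subseteq> V \<and> V \<subseteq> S} = {}" by auto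
        then show ?thesis using e by (metis card.empty dvd_0_right)
      qed
    qed
    have "even (\<Sum>V\<in>?SG. card {T\<in>v. J \<union> T \<subseteq> V} + (if J \<subseteq> V \<and> V \<subseteq> S then 1 else 0))"
      by (rule dvd_sum) (use tm in blast)
    then show ?thesis using ind unfolding sum.distrib by simp
  qed
  have "even (\<Sum>V\<in>?SG. card {U\<in>g. U \<subseteq> V} + card {T\<in>v. J \<union> T \<subseteq> V})"
    by (rule dvd_sum) (use step1 in blast)
  then show ?thesis using step2 unfolding psi_def sum.distrib by simp
qed

lemma psi_span:
  assumes "x \<in> PP"
  shows "even (psi x)"
  using assms
proof (induction x rule: z2_span.induct)
  case zero
  then show ?case by (simp add: psi_def)
next
  case (add x g)
  have ev: "even (psi g)" using psi_gen[OF add.hyps(2)] .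
  have "even (card {U\<in>(x - g) \<union> (g - x). U \<subseteq> V} + card {U\<in>x. U \<subseteq> V} + card {U\<in>g. U \<subseteq> V})"
    if "V \<in> {V. subgee l n V}" for V
  proof -
    have fV: "finite V" using subgee_fin that by simp
    have f1: "finite {U\<in>x. U \<subseteq> V}" by (rule finite_subset[of _ "Pow V"]) (use fV in auto)
    have f2: "finite {U\<in>g. U \<subseteq> V}" by (rule finite_subset[of _ "Pow V"]) (use fV in auto)
    have e: "{U\<in>(x - g) \<union> (g - x). U \<subseteq> V} = symd {U\<in>x. U \<subseteq> V} {U\<in>g. U \<subseteq> V}"
      by (auto simp: symd_def)
    have h: "even (card (symd {U\<in>x. U \<subseteq> V} {U\<in>g. U \<subseteq> V})) \<longleftrightarrow> even (card {U\<in>x. U \<subseteq> V} + card {U\<in>g. U \<subseteq> V})"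
      using even_card_symd[OF f1 f2] .
    show ?thesis unfolding e using h by presburger
  qed
  then have "even (\<Sum>V\<in>{V. subgee l n V}. card {U\<in>(x - g) \<union> (g - x). U \<subseteq> V} + card {U\<in>x. U \<subseteq> V} + card {U\<in>g. U \<subseteq> V})"
    by (intro dvd_sum) blast
  then show ?case using add.IH ev unfolding psi_def sum.distrib by simp
qed

lemma key_span2:
  assumes "{U} \<in> PP"
  shows "even (card {V. subgee l n V \<and> U \<subseteq> V})"
proof -
  have "psi {U} = (\<Sum>V\<in>{V. subgee l n V}. if U \<subseteq> V then 1 else 0)"
  proof -
    have "{U'\<in>{U}. U' \<subseteq> V} = (if U \<subseteq> V then {U} else {})" for V by auto
    then show ?thesis unfolding psi_def by (intro sum.cong) auto
  qed
  also have "\<dots> = card {V\<in>{V. subgee l n V}. U \<subseteq> V}"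
    using sum.inter_filter[OF finite_subgees, of "\<lambda>_. (1::nat)" "\<lambda>V. U \<subseteq> V"] by simp
  finally have "psi {U} = card {V. subgee l n V \<and> U \<subseteq> V}" by simp
  then show ?thesis using psi_span[OF assms] by simp
qed

lemma span_iff:
  assumes "U \<subseteq> {1..n-1}" "card U \<le> m"
  shows "{U} \<in> PP \<longleftrightarrow> even (card {V. subgee l n V \<and> U \<subseteq> V})"
  using key_span[OF assms] key_span2 by blast

end

lemma set_le_refl: "set_le A A"
  unfolding set_le_def by (rule exI[of _ id]) auto

lemma set_le_trans:
  assumes "set_le A B" "set_le B C"
  shows "set_le A C"
proof -
  obtain f where f: "inj_on f A" "f ` A \<subseteq> B" "\<forall>s\<in>A. s \<le> f s"
    using assms(1) unfolding set_le_def by blast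
  obtain h where h: "inj_on h B" "h ` B \<subseteq> C" "\<forall>s\<in>B. s \<le> h s"
    using assms(2) unfolding set_le_def by blast
  have "inj_on (h \<circ> f) A"
    using f h by (meson comp_inj_on inj_on_subset)
  moreover have "(h \<circ> f) ` A \<subseteq> C" using f h by auto
  moreover have "\<forall>s\<in>A. s \<le> (h \<circ> f) s" using f h by (metis comp_apply image_subset_iff le_trans)
  ultimately show ?thesis unfolding set_le_def by blast
qed

definition wt :: "nat set \<Rightarrow> nat" where "wt A = (\<Sum>a\<in>A. Suc a)"

lemma set_le_wt:
  assumes fB: "finite B" and le: "set_le A B"
  shows "wt A \<le> wt B \<and> (wt A = wt B \<longrightarrow> A = B)"
proof -
  obtain f where f: "inj_on f A" "f ` A \<subseteq> B" "\<forall>s\<in>A. s \<le> f s"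
    using le unfolding set_le_def by blast
  have fA: "finite A" using finite_imageD[OF finite_subset[OF f(2) fB] f(1)] .
  have s1: "wt A \<le> (\<Sum>a\<in>A. Suc (f a))" unfolding wt_def by (rule sum_mono) (use f in auto)
  have s2: "(\<Sum>a\<in>A. Suc (f a)) = (\<Sum>b\<in>f ` A. Suc b)" using sum.reindex[OF f(1), of Suc] by simp
  have s3: "(\<Sum>b\<in>f ` A. Suc b) + (\<Sum>b\<in>B - f ` A. Suc b) = wt B"
    unfolding wt_def using sum.subset_diff[OF f(2) fB, of Suc] by simp
  have eq: "A = B" if "wt A = wt B"
  proof -
    have z: "(\<Sum>b\<in>B - f ` A. Suc b) = 0" using s1 s2 s3 that by linarith
    then have "B - f ` A = {}" using fB by (simp add: sum_eq_0_iff, blast)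
    then have fAB: "f ` A = B" using f(2) by blast
    have "\<forall>a\<in>A. f a = a"
    proof (rule ccontr)
      assume "\<not> (\<forall>a\<in>A. f a = a)"
      then obtain a where "a \<in> A" "f a \<noteq> a" by blast
      then have "\<exists>a\<in>A. Suc a < Suc (f a)" using f(3) by force
      then have "(\<Sum>a\<in>A. Suc a) < (\<Sum>a\<in>A. Suc (f a))"
        using sum_strict_mono_ex1[OF fA, of Suc "\<lambda>a. Suc (f a)"] f(3) by simp
      then show False using s2 s3 that z unfolding wt_def by linarith
    qed
    then have "f ` A = A" by auto
    then show ?thesis using fAB by simp
  qed
  show ?thesis using s1 s2 s3 eq by linarith
qed

context hk
begin

lemma short_alt: "short l n X \<longleftrightarrow> X \<subseteq> {1..n} \<and> 2 * sum l X < sum l {1..n}"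
proof -
  have "X \<subseteq> {1..n} \<Longrightarrow> sum l ({1..n} - X) = sum l {1..n} - sum l X"
    by (rule sum_diff) auto
  then show ?thesis unfolding short_def by auto
qed

lemma short_mono:
  assumes le: "set_le A B" and A1: "A \<subseteq> {1..n}" and sB: "short l n B"
  shows "short l n A"
proof -
  obtain f where f: "inj_on f A" "f ` A \<subseteq> B" "\<forall>s\<in>A. s \<le> f s"
    using le unfolding set_le_def by blast
  have B1: "B \<subseteq> {1..n}" using sB unfolding short_def by auto
  have fB: "finite B" using B1 finite_subset by blast
  have "sum l A \<le> (\<Sum>a\<in>A. l (f a))"
  proof (rule sum_mono)
    fix a assume a: "a \<in> A"
    then have "f a \<in> B" using f by auto
    then show "l a \<le> l (f a)" using a A1 B1 f(3) lmono by force
  qed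
  also have "\<dots> = sum l (f ` A)" using sum.reindex[OF f(1), of l] by simp
  also have "\<dots> \<le> sum l B" by (rule sum_mono_l[OF fB f(2) B1])
  finally show ?thesis using sB A1 unfolding short_alt by auto
qed

end

locale hkg = hk +
  fixes g :: "nat \<Rightarrow> nat" and k :: nat
  assumes gc: "genetic_code l n = {insert n (g ` {1..k})}"
    and gb: "\<forall>i\<in>{1..k}. 1 \<le> g i \<and> g i < n"
    and gd: "\<forall>i. 1 \<le> i \<and> i < k \<longrightarrow> g (i + 1) < g i"
begin

abbreviation Gp where "Gp \<equiv> g ` {1..k}"

lemma Gp_sub: "Gp \<subseteq> {1..n-1}" using gb by force

lemma n_notin_Gp: "n \<notin> Gp" using gb by force

lemma G_gc: "insert n Gp \<in> genetic_code l n" using gc by simp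

lemma subgee_iff: "subgee l n V \<longleftrightarrow> V \<subseteq> {1..n-1} \<and> set_le V Gp"
proof
  assume "V \<subseteq> {1..n-1} \<and> set_le V Gp"
  then have V1: "V \<subseteq> {1..n-1}" and le: "set_le V Gp" by auto
  obtain f where f: "inj_on f V" "f ` V \<subseteq> Gp" "\<forall>s\<in>V. s \<le> f s"
    using le unfolding set_le_def by blast
  have nV: "n \<notin> V" using V1 nm by auto
  let ?F = "\<lambda>x. if x = n then n else f x"
  have "inj_on ?F (insert n V)"
    unfolding inj_on_def using f n_notin_Gp nV by (auto simp: inj_on_def)
  moreover have "?F ` insert n V \<subseteq> insert n Gp" using f by auto
  moreover have "\<forall>s\<in>insert n V. s \<le> ?F s" using f by auto
  ultimately have "set_le (insert n V) (insert n Gp)" unfolding set_le_def by blast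
  moreover have "short l n (insert n Gp)" using G_gc unfolding genetic_code_def by auto
  moreover have "insert n V \<subseteq> {1..n}" using V1 nm by auto
  ultimately have "short l n (insert n V)" using short_mono by blast
  then show "subgee l n V" unfolding subgee_def using V1 by simp
next
  assume sV: "subgee l n V"
  let ?X = "insert n V"
  have V1: "V \<subseteq> {1..n-1}" using subgee_sub[OF sV] .
  have nV: "n \<notin> V" using V1 nm by auto
  define C where "C = {T. short l n T \<and> n \<in> T \<and> set_le ?X T}"
  have fC: "finite C" unfolding C_def
    by (rule finite_subset[of _ "Pow {1..n}"]) (auto simp: short_def)
  have XC: "?X \<in> C" unfolding C_def using sV set_le_refl unfolding subgee_def by auto
  obtain T where TC: "T \<in> C" and Tmax: "\<forall>T'\<in>C. wt T' \<le> wt T"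
  proof -
    have "Max (wt ` C) \<in> wt ` C" using fC XC by (intro Max_in) auto
    then obtain T where "T \<in> C" "wt T = Max (wt ` C)" by auto
    moreover have "\<forall>T'\<in>C. wt T' \<le> Max (wt ` C)" using fC by auto
    ultimately show ?thesis using that by auto
  qed
  have "T \<in> genetic_code l n"
    unfolding genetic_code_def
  proof (intro CollectI conjI allI impI)
    show "short l n T" "n \<in> T" using TC unfolding C_def by auto
    fix T' assume T': "short l n T' \<and> n \<in> T' \<and> set_le T T'"
    then have "T' \<in> C" using TC set_le_trans unfolding C_def by blast
    then have "wt T' \<le> wt T" using Tmax by auto
    moreover have fT': "finite T'" using T' unfolding short_def by (auto intro: finite_subset)
    ultimately show "T' = T" using set_le_wt[OF fT'] T' by force
  qed
  then have "T = insert n Gp" using gc by auto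
  then have le: "set_le ?X (insert n Gp)" using TC unfolding C_def by auto
  obtain f where f: "inj_on f ?X" "f ` ?X \<subseteq> insert n Gp" "\<forall>s\<in>?X. s \<le> f s"
    using le unfolding set_le_def by blast
  have "f n \<in> insert n Gp" "n \<le> f n" using f by auto
  then have fn: "f n = n" using gb by force
  have "f v \<in> Gp" if "v \<in> V" for v
  proof -
    have "f v \<noteq> f n" using f(1) that nV unfolding inj_on_def by blast
    then show ?thesis using f(2) fn that by auto
  qed
  then have "set_le V Gp" unfolding set_le_def using f inj_on_subset[OF f(1), of V]
    by (intro exI[of _ f]) auto
  then show "V \<subseteq> {1..n-1} \<and> set_le V Gp" using V1 by simp
qed

end

context hkg
begin

lemma g_strict: "1 \<le> i \<Longrightarrow> i < j \<Longrightarrow> j \<le> k \<Longrightarrow> g j < g i"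
proof (induction j)
  case 0
  then show ?case by simp
next
  case (Suc j)
  show ?case
  proof (cases "i = j")
    case True
    then show ?thesis using gd Suc.prems by auto
  next
    case False
    then have "g j < g i" using Suc by auto
    moreover have "g (Suc j) < g j" using gd Suc.prems False by auto
    ultimately show ?thesis by simp
  qed
qed

lemma g_mono: "1 \<le> i \<Longrightarrow> i \<le> j \<Longrightarrow> j \<le> k \<Longrightarrow> g j \<le> g i"
  using g_strict by (cases "i = j") (auto intro: less_imp_le)

lemma g_inj: "inj_on g {1..k}"
  by (rule inj_onI) (metis atLeastAtMost_iff g_strict linorder_neqE_nat less_irrefl)

lemma card_Gp: "card Gp = k"
  using card_image[OF g_inj] by simp

definition bb :: "nat \<Rightarrow> nat" where "bb i = (if i = k then 0 else g (i + 1))"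

lemma bb_lt: "i \<in> {1..k} \<Longrightarrow> bb i < g i"
proof -
  assume i: "i \<in> {1..k}"
  have "1 \<le> g k" using gb i by auto
  then show ?thesis unfolding bb_def using gd i by auto
qed

lemma gt_bb_iff:
  assumes "i \<in> {1..k}" "j \<in> {1..k}"
  shows "bb i < g j \<longleftrightarrow> j \<le> i"
proof
  assume "j \<le> i"
  then have "g i \<le> g j" using g_mono assms by auto
  then show "bb i < g j" using bb_lt[OF assms(1)] by simp
next
  assume "bb i < g j"
  show "j \<le> i"
  proof (rule ccontr)
    assume "\<not> j \<le> i"
    then have "i \<noteq> k" "i + 1 \<le> j" using assms by auto
    then have "g j \<le> g (i + 1)" using g_mono assms by auto
    then show False using \<open>bb i < g j\<close> \<open>i \<noteq> k\<close> unfolding bb_def by simp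
  qed
qed

lemma setle_adm:
  assumes V1: "V \<subseteq> {1..n-1}" and kpos: "1 \<le> k"
  shows "set_le V Gp \<longleftrightarrow> (\<forall>v\<in>V. v \<le> g 1) \<and> (\<forall>i\<in>{1..k}. card {v\<in>V. bb i < v} \<le> i)"
proof
  assume "set_le V Gp"
  then obtain f where f: "inj_on f V" "f ` V \<subseteq> Gp" "\<forall>s\<in>V. s \<le> f s"
    unfolding set_le_def by blast
  have a: "\<forall>v\<in>V. v \<le> g 1"
  proof
    fix v assume v: "v \<in> V"
    then obtain j where j: "j \<in> {1..k}" "f v = g j" using f by auto
    then have "g j \<le> g 1" using g_mono by auto
    then show "v \<le> g 1" using f(3) v j by force
  qed
  have b: "card {v\<in>V. bb i < v} \<le> i" if i: "i \<in> {1..k}" for i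
  proof -
    have "card {v\<in>V. bb i < v} = card (f ` {v\<in>V. bb i < v})"
      using card_image[OF inj_on_subset[OF f(1)]] by auto
    also have "\<dots> \<le> card (g ` {1..i})"
    proof (rule card_mono)
      show "f ` {v\<in>V. bb i < v} \<subseteq> g ` {1..i}"
      proof
        fix x assume "x \<in> f ` {v\<in>V. bb i < v}"
        then obtain v where v: "v \<in> V" "bb i < v" "x = f v" by auto
        then obtain j where j: "j \<in> {1..k}" "f v = g j" using f by auto
        have "bb i < g j" using v j f(3) by force
        then have "j \<le> i" using gt_bb_iff i j by auto
        then show "x \<in> g ` {1..i}" using j v by auto
      qed
    qed auto
    also have "\<dots> \<le> i" using card_image_le[of "{1..i}" g] by simp
    finally show ?thesis .
  qed
  show "(\<forall>v\<in>V. v \<le> g 1) \<and> (\<forall>i\<in>{1..k}. card {v\<in>V. bb i < v} \<le> i)" using a b by blast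
next
  assume h: "(\<forall>v\<in>V. v \<le> g 1) \<and> (\<forall>i\<in>{1..k}. card {v\<in>V. bb i < v} \<le> i)"
  have fV: "finite V" using V1 finite_subset by auto
  define rk where "rk v = card {w\<in>V. v \<le> w}" for v
  have e: "{v\<in>V. bb k < v} = V" using V1 unfolding bb_def by auto
  have "k \<in> {1..k}" using kpos by simp
  then have "card {v\<in>V. bb k < v} \<le> k" using h by blast
  then have cV: "card V \<le> k" unfolding e .
  have rk1: "1 \<le> rk v" if "v \<in> V" for v
  proof -
    have "finite {w\<in>V. v \<le> w}" "v \<in> {w\<in>V. v \<le> w}" using fV that by auto
    then show ?thesis unfolding rk_def by (metis card_0_eq empty_iff less_one not_less)
  qed
  have rk2: "rk v \<le> k" for v
    unfolding rk_def using card_mono[OF fV, of "{w\<in>V. v \<le> w}"] cV by auto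
  have rk_lt: "rk w < rk v" if "v \<in> V" "w \<in> V" "v < w" for v w
  proof -
    have m: "v \<in> {x\<in>V. v \<le> x}" "v \<notin> {x\<in>V. w \<le> x}" using that by auto
    have s: "{x\<in>V. w \<le> x} \<subseteq> {x\<in>V. v \<le> x}" using that by auto
    have "{x\<in>V. w \<le> x} \<noteq> {x\<in>V. v \<le> x}" using m by blast
    then have "{x\<in>V. w \<le> x} \<subset> {x\<in>V. v \<le> x}" using s by blast
    then show ?thesis unfolding rk_def by (rule psubset_card_mono[rotated]) (use fV in auto)
  qed
  define F where "F v = g (rk v)" for v
  have "inj_on F V"
  proof (rule inj_onI)
    fix v w assume vw: "v \<in> V" "w \<in> V" "F v = F w"
    then have "rk v = rk w" using inj_onD[OF g_inj] rk1 rk2 unfolding F_def by auto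
    then show "v = w" using rk_lt vw by (metis less_irrefl linorder_neqE_nat)
  qed
  moreover have "F ` V \<subseteq> Gp" using rk1 rk2 unfolding F_def by auto
  moreover have "\<forall>v\<in>V. v \<le> F v"
  proof
    fix v assume v: "v \<in> V"
    show "v \<le> F v"
    proof (cases "rk v = 1")
      case True
      then show ?thesis using h v unfolding F_def by auto
    next
      case False
      then have r2: "rk v \<ge> 2" using rk1[OF v] by simp
      show ?thesis
      proof (rule ccontr)
        assume "\<not> v \<le> F v"
        then have lt: "g (rk v) < v" unfolding F_def by simp
        define i where "i = rk v - 1"
        have i: "i \<in> {1..k}" "i \<noteq> k" "i + 1 = rk v" using r2 rk2[of v] unfolding i_def by auto
        then have "bb i = g (rk v)" unfolding bb_def by simp
        then have "{w\<in>V. v \<le> w} \<subseteq> {w\<in>V. bb i < w}" using lt by auto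
        then have "rk v \<le> card {w\<in>V. bb i < w}"
          unfolding rk_def by (rule card_mono[rotated]) (use fV in auto)
        also have "\<dots> \<le> i" using h i by auto
        finally show False using i by simp
      qed
    qed
  qed
  ultimately show "set_le V Gp" unfolding set_le_def by blast
qed

definition adm :: "nat set \<Rightarrow> bool" where
  "adm V \<longleftrightarrow> V \<subseteq> {1..n-1} \<and> (\<forall>v\<in>V. v \<le> g 1) \<and> (\<forall>i\<in>{1..k}. card {v\<in>V. bb i < v} \<le> i)"

lemma subgee_adm: "1 \<le> k \<Longrightarrow> subgee l n V \<longleftrightarrow> adm V"
  unfolding subgee_iff adm_def using setle_adm by blast

end

lemma slot_reduce:
  fixes A :: "nat set set" and S :: "nat set" and cn :: "nat \<Rightarrow> nat set"
  assumes fA: "finite A" and fS: "finite S"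
    and cl: "\<And>V Y. V \<in> A \<Longrightarrow> Y \<subseteq> S \<Longrightarrow> card Y = card (V \<inter> S) \<Longrightarrow> (V - S) \<union> Y \<in> A"
    and cn: "\<And>y. y \<le> card S \<Longrightarrow> cn y \<subseteq> S \<and> card (cn y) = y"
  shows "even (card A) \<longleftrightarrow>
         even (card {V\<in>A. V \<inter> S = cn (card (V \<inter> S)) \<and> odd (card S choose card (V \<inter> S))})"
proof -
  define \<tau> where "\<tau> V = (V - S, card (V \<inter> S))" for V
  have fib: "card {V\<in>A. \<tau> V = z} = card S choose snd z" if zA: "z \<in> \<tau> ` A" for z
  proof -
    obtain V0 where V0: "V0 \<in> A" "z = \<tau> V0" using zA by blast
    define W where "W = V0 - S"
    define y where "y = card (V0 \<inter> S)"
    have z: "z = (W, y)" using V0 unfolding \<tau>_def W_def y_def by simp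
    have e: "{V\<in>A. \<tau> V = z} = (\<lambda>Y. W \<union> Y) ` {Y. Y \<subseteq> S \<and> card Y = y}"
    proof
      show "{V\<in>A. \<tau> V = z} \<subseteq> (\<lambda>Y. W \<union> Y) ` {Y. Y \<subseteq> S \<and> card Y = y}"
      proof
        fix V assume "V \<in> {V\<in>A. \<tau> V = z}"
        then have V: "V - S = W" "card (V \<inter> S) = y" using z unfolding \<tau>_def by auto
        then have "V = W \<union> (V \<inter> S)" by auto
        then show "V \<in> (\<lambda>Y. W \<union> Y) ` {Y. Y \<subseteq> S \<and> card Y = y}" using V by blast
      qed
      show "(\<lambda>Y. W \<union> Y) ` {Y. Y \<subseteq> S \<and> card Y = y} \<subseteq> {V\<in>A. \<tau> V = z}"
      proof
        fix V assume "V \<in> (\<lambda>Y. W \<union> Y) ` {Y. Y \<subseteq> S \<and> card Y = y}"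
        then obtain Y where Y: "Y \<subseteq> S" "card Y = y" "V = W \<union> Y" by auto
        have "V \<in> A" using cl[OF V0(1) Y(1)] Y unfolding W_def y_def by simp
        moreover have "V - S = W" "V \<inter> S = Y" using Y unfolding W_def by auto
        ultimately show "V \<in> {V\<in>A. \<tau> V = z}" using z Y unfolding \<tau>_def by simp
      qed
    qed
    have inj: "inj_on (\<lambda>Y. W \<union> Y) {Y. Y \<subseteq> S \<and> card Y = y}"
    proof (rule inj_onI)
      fix Y1 Y2 assume "Y1 \<in> {Y. Y \<subseteq> S \<and> card Y = y}" "Y2 \<in> {Y. Y \<subseteq> S \<and> card Y = y}" "W \<union> Y1 = W \<union> Y2"
      then have "(W \<union> Y1) \<inter> S = (W \<union> Y2) \<inter> S" "Y1 \<subseteq> S" "Y2 \<subseteq> S" by auto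
      moreover have "W \<inter> S = {}" unfolding W_def by auto
      ultimately show "Y1 = Y2" by blast
    qed
    have "card {V\<in>A. \<tau> V = z} = card {Y. Y \<subseteq> S \<and> card Y = y}"
      unfolding e using card_image[OF inj] .
    also have "\<dots> = card S choose y" using n_subsets[OF fS] .
    finally show ?thesis using z by simp
  qed
  have O: "{z. odd (card {V\<in>A. \<tau> V = z})} = {z\<in>\<tau> ` A. odd (card S choose snd z)}"
  proof -
    have "odd (card {V\<in>A. \<tau> V = z}) \<longleftrightarrow> z \<in> \<tau> ` A \<and> odd (card S choose snd z)" for z
    proof (cases "z \<in> \<tau> ` A")
      case True
      then show ?thesis using fib by simp
    next
      case False
      then have "{V\<in>A. \<tau> V = z} = {}" by auto
      then show ?thesis using False by (metis card.empty even_zero)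
    qed
    then show ?thesis by blast
  qed
  define B where "B = {V\<in>A. V \<inter> S = cn (card (V \<inter> S)) \<and> odd (card S choose card (V \<inter> S))}"
  have injB: "inj_on \<tau> B"
  proof (rule inj_onI)
    fix V1 V2 assume V: "V1 \<in> B" "V2 \<in> B" "\<tau> V1 = \<tau> V2"
    have "V1 = (V1 - S) \<union> cn (card (V1 \<inter> S))" using V(1) unfolding B_def by blast
    also have "\<dots> = (V2 - S) \<union> cn (card (V2 \<inter> S))" using V(3) unfolding \<tau>_def by simp
    also have "\<dots> = V2" using V(2) unfolding B_def by blast
    finally show "V1 = V2" .
  qed
  have imB: "\<tau> ` B = {z\<in>\<tau> ` A. odd (card S choose snd z)}"
  proof
    show "\<tau> ` B \<subseteq> {z\<in>\<tau> ` A. odd (card S choose snd z)}"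
      unfolding B_def \<tau>_def by auto
    show "{z\<in>\<tau> ` A. odd (card S choose snd z)} \<subseteq> \<tau> ` B"
    proof
      fix z assume "z \<in> {z\<in>\<tau> ` A. odd (card S choose snd z)}"
      then obtain V0 where V0: "V0 \<in> A" "z = \<tau> V0" "odd (card S choose card (V0 \<inter> S))"
        unfolding \<tau>_def by auto
      define y where "y = card (V0 \<inter> S)"
      have "y \<le> card S" unfolding y_def by (rule card_mono[OF fS]) auto
      then have cny: "cn y \<subseteq> S" "card (cn y) = y" using cn by auto
      define V where "V = (V0 - S) \<union> cn y"
      have "V \<in> A" unfolding V_def using cl[OF V0(1) cny(1)] cny(2) y_def by simp
      moreover have VS: "V \<inter> S = cn y" "V - S = V0 - S" unfolding V_def using cny by auto
      ultimately have "V \<in> B" unfolding B_def using cny V0(3) y_def by simp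
      moreover have "\<tau> V = z" using V0(2) VS cny unfolding \<tau>_def y_def by simp
      ultimately show "z \<in> \<tau> ` B" by blast
    qed
  qed
  have "card B = card {z\<in>\<tau> ` A. odd (card S choose snd z)}"
    using card_image[OF injB] imB by simp
  then show ?thesis using fiber_parity[OF fA, of \<tau>] O unfolding B_def by simp
qed

locale hkg1 = hkg +
  assumes kpos: "1 \<le> k"
begin

definition Sl :: "nat \<Rightarrow> nat set" where "Sl p = {bb p<..<g p}"
definition cn :: "nat \<Rightarrow> nat \<Rightarrow> nat set" where "cn p y = {bb p<..bb p + y}"
definition cc :: "nat \<Rightarrow> nat" where "cc p = g p - Suc (bb p)"

lemma card_Sl: "card (Sl p) = cc p"
  unfolding Sl_def cc_def by simp

lemma finite_Sl: "finite (Sl p)" unfolding Sl_def by simp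

lemma cn_props: "y \<le> card (Sl p) \<Longrightarrow> cn p y \<subseteq> Sl p \<and> card (cn p y) = y"
proof -
  assume y: "y \<le> card (Sl p)"
  have "card (Sl p) = g p - Suc (bb p)" unfolding Sl_def by simp
  then have "bb p + y < g p \<or> y = 0" using y by linarith
  then have "cn p y \<subseteq> Sl p" unfolding cn_def Sl_def by auto
  moreover have "card (cn p y) = y" unfolding cn_def by simp
  ultimately show ?thesis by simp
qed

lemma cn0: "cn p 0 = {}" unfolding cn_def by auto

lemma bb_mono: "p \<in> {1..k} \<Longrightarrow> i \<in> {1..k} \<Longrightarrow> p \<le> i \<Longrightarrow> bb i \<le> bb p"
proof -
  assume a: "p \<in> {1..k}" "i \<in> {1..k}" "p \<le> i"
  show ?thesis
  proof (cases "i = k")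
    case True
    then show ?thesis unfolding bb_def by simp
  next
    case False
    then have "p \<noteq> k" "i < k" using a by auto
    moreover have "g (i + 1) \<le> g (p + 1)" using g_mono[of "p+1" "i+1"] a \<open>i < k\<close> by simp
    ultimately show ?thesis unfolding bb_def using False by simp
  qed
qed

lemma Sl_disj:
  assumes "p \<in> {1..k}" "q \<in> {1..k}" "p \<noteq> q"
  shows "Sl p \<inter> Sl q = {}"
proof -
  have *: "Sl p \<inter> Sl q = {}" if "p \<in> {1..k}" "q \<in> {1..k}" "p < q" for p q
  proof -
    have "g q \<le> g (p + 1)" using g_mono that by auto
    moreover have "bb p = g (p + 1)" using that unfolding bb_def by auto
    ultimately show ?thesis unfolding Sl_def by auto
  qed
  show ?thesis using *[of p q] *[of q p] assms by (cases "p < q") auto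
qed

lemma Sl_Gp: "p \<in> {1..k} \<Longrightarrow> Sl p \<inter> Gp = {}"
proof (rule ccontr)
  assume p: "p \<in> {1..k}" and "Sl p \<inter> Gp \<noteq> {}"
  then obtain j where j: "j \<in> {1..k}" "g j \<in> Sl p" by blast
  then have "bb p < g j" "g j < g p" unfolding Sl_def by auto
  then have "j \<le> p" using gt_bb_iff p j by auto
  then have "g p \<le> g j" using g_mono p j by auto
  then show False using \<open>g j < g p\<close> by simp
qed

lemma Sl_bounds: "p \<in> {1..k} \<Longrightarrow> u \<in> Sl p \<Longrightarrow> 1 \<le> u \<and> u \<le> g 1 \<and> u \<le> n - 1"
proof -
  assume p: "p \<in> {1..k}" and u: "u \<in> Sl p"
  have "g p \<le> g 1" using g_mono p by auto
  moreover have "g 1 < n" using gb kpos by auto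
  ultimately show ?thesis using u unfolding Sl_def by auto
qed

lemma Sl_thr1: "p \<in> {1..k} \<Longrightarrow> i \<in> {1..k} \<Longrightarrow> p \<le> i \<Longrightarrow> u \<in> Sl p \<Longrightarrow> bb i < u"
proof -
  assume a: "p \<in> {1..k}" "i \<in> {1..k}" "p \<le> i" "u \<in> Sl p"
  have "bb i \<le> bb p" using bb_mono a by blast
  moreover have "bb p < u" using a unfolding Sl_def by simp
  ultimately show ?thesis by simp
qed

lemma Sl_thr2: "p \<in> {1..k} \<Longrightarrow> i \<in> {1..k} \<Longrightarrow> i < p \<Longrightarrow> u \<in> Sl p \<Longrightarrow> \<not> bb i < u"
proof -
  assume a: "p \<in> {1..k}" "i \<in> {1..k}" "i < p" "u \<in> Sl p"
  have "g p \<le> g (i + 1)" using g_mono a by auto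
  moreover have "bb i = g (i + 1)" using a unfolding bb_def by auto
  ultimately show ?thesis using a unfolding Sl_def by auto
qed

lemma cover:
  assumes u: "1 \<le> u" "u \<le> g 1" "u \<notin> Gp"
  shows "\<exists>p\<in>{1..k}. u \<in> Sl p"
proof -
  define P where "P = {p\<in>{1..k}. u < g p}"
  have "g 1 \<in> Gp" using kpos by auto
  then have "1 \<in> P" unfolding P_def using u kpos by (auto simp: order.order_iff_strict)
  then have fP: "finite P" "P \<noteq> {}" unfolding P_def by auto
  define p where "p = Max P"
  have pP: "p \<in> P" unfolding p_def using Max_in[OF fP] .
  have pmax: "\<forall>q\<in>P. q \<le> p" unfolding p_def using Max_ge[OF fP(1)] by auto
  show ?thesis
  proof (cases "p = k")
    case True
    then have "u \<in> Sl p" using pP u unfolding P_def Sl_def bb_def by auto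
    then show ?thesis using pP unfolding P_def by auto
  next
    case False
    then have "p + 1 \<in> {1..k}" using pP unfolding P_def by auto
    then have "\<not> u < g (p + 1)" using pmax unfolding P_def by fastforce
    moreover have "u \<noteq> g (p + 1)" using u \<open>p + 1 \<in> {1..k}\<close> by auto
    ultimately have "u \<in> Sl p" using pP False unfolding P_def Sl_def bb_def by auto
    then show ?thesis using pP unfolding P_def by auto
  qed
qed

lemma adm_decomp: "adm V \<Longrightarrow> V \<subseteq> Gp \<union> (\<Union>p\<in>{1..k}. Sl p)"
proof
  fix v assume V: "adm V" and v: "v \<in> V"
  then have "1 \<le> v" "v \<le> g 1" unfolding adm_def by auto
  then show "v \<in> Gp \<union> (\<Union>p\<in>{1..k}. Sl p)" using cover[of v] by blast
qed

lemma adm_closed: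
  assumes V: "adm V" and q: "q \<in> {1..k}" and Y: "Y \<subseteq> Sl q" "card Y = card (V \<inter> Sl q)"
  shows "adm ((V - Sl q) \<union> Y)"
proof -
  let ?V' = "(V - Sl q) \<union> Y"
  have V1: "V \<subseteq> {1..n-1}" "\<forall>v\<in>V. v \<le> g 1" "\<forall>i\<in>{1..k}. card {v\<in>V. bb i < v} \<le> i"
    using V unfolding adm_def by auto
  have fV: "finite V" using V1(1) by (meson finite_atLeastAtMost finite_subset)
  have fY: "finite Y" using Y finite_Sl finite_subset by auto
  have a: "?V' \<subseteq> {1..n-1}" using V1 Y Sl_bounds[OF q] by force
  have b: "\<forall>v\<in>?V'. v \<le> g 1" using V1 Y Sl_bounds[OF q] by force
  have c: "card {v\<in>?V'. bb i < v} \<le> i" if i: "i \<in> {1..k}" for i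
  proof (cases "q \<le> i")
    case True
    have thr: "\<forall>u\<in>Sl q. bb i < u" using Sl_thr1[OF q i True] by blast
    have e1: "{v\<in>?V'. bb i < v} = {v\<in>V - Sl q. bb i < v} \<union> Y" using Y thr by auto
    have e2: "{v\<in>V. bb i < v} = {v\<in>V - Sl q. bb i < v} \<union> (V \<inter> Sl q)" using thr by auto
    have d1: "{v\<in>V - Sl q. bb i < v} \<inter> Y = {}" using Y by auto
    have d2: "{v\<in>V - Sl q. bb i < v} \<inter> (V \<inter> Sl q) = {}" by auto
    have "card {v\<in>?V'. bb i < v} = card {v\<in>V - Sl q. bb i < v} + card Y"
      unfolding e1 by (rule card_Un_disjoint) (use fV fY d1 in auto)
    also have "\<dots> = card {v\<in>V. bb i < v}"
      unfolding e2 Y(2) by (rule card_Un_disjoint[symmetric]) (use fV d2 in auto)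
    finally show ?thesis using V1 i by simp
  next
    case False
    have thr: "\<forall>u\<in>Sl q. \<not> bb i < u" using Sl_thr2[OF q i] False by auto
    have "{v\<in>?V'. bb i < v} = {v\<in>V. bb i < v}" using Y thr by auto
    then show ?thesis using V1 i by simp
  qed
  show ?thesis unfolding adm_def using a b c by blast
qed

definition AJ :: "nat set \<Rightarrow> nat set set" where "AJ J = {V. adm V \<and> g ` J \<subseteq> V}"

definition goodV :: "nat \<Rightarrow> nat set \<Rightarrow> bool" where
  "goodV p V \<longleftrightarrow> V \<inter> Sl p = cn p (card (V \<inter> Sl p)) \<and> odd (cc p choose card (V \<inter> Sl p))"

lemma finite_AJ: "finite (AJ J)"
  unfolding AJ_def adm_def by (rule finite_subset[of _ "Pow {1..n-1}"]) auto

lemma iter: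
  assumes J: "J \<subseteq> {1..k}"
  shows "finite P \<Longrightarrow> P \<subseteq> {1..k} \<Longrightarrow>
    even (card (AJ J)) \<longleftrightarrow> even (card {V\<in>AJ J. \<forall>p\<in>P. goodV p V})"
proof (induction P rule: finite_induct)
  case empty
  then show ?case by simp
next
  case (insert q P)
  have q: "q \<in> {1..k}" using insert.prems by auto
  let ?A = "{V\<in>AJ J. \<forall>p\<in>P. goodV p V}"
  have fA: "finite ?A" using finite_AJ by auto
  have cl: "(V - Sl q) \<union> Y \<in> ?A" if V: "V \<in> ?A" and Y: "Y \<subseteq> Sl q" "card Y = card (V \<inter> Sl q)" for V Y
  proof -
    have "adm ((V - Sl q) \<union> Y)" using adm_closed[OF _ q Y] V unfolding AJ_def by auto
    moreover have "g ` J \<subseteq> (V - Sl q) \<union> Y" using V Sl_Gp[OF q] J unfolding AJ_def by auto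
    moreover have "goodV p ((V - Sl q) \<union> Y)" if p: "p \<in> P" for p
    proof -
      have pk: "p \<in> {1..k}" "p \<noteq> q" using p insert by auto
      have "((V - Sl q) \<union> Y) \<inter> Sl p = V \<inter> Sl p"
        using Sl_disj[OF pk(1) q pk(2)] Y by auto
      then show ?thesis using V p unfolding goodV_def by simp
    qed
    ultimately show ?thesis unfolding AJ_def by auto
  qed
  have red: "even (card ?A) \<longleftrightarrow>
     even (card {V\<in>?A. V \<inter> Sl q = cn q (card (V \<inter> Sl q)) \<and> odd (card (Sl q) choose card (V \<inter> Sl q))})"
    by (rule slot_reduce[OF fA finite_Sl cl]) (use cn_props in auto)
  have eq: "{V\<in>?A. V \<inter> Sl q = cn q (card (V \<inter> Sl q)) \<and> odd (card (Sl q) choose card (V \<inter> Sl q))}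
        = {V\<in>AJ J. \<forall>p\<in>insert q P. goodV p V}"
    unfolding goodV_def card_Sl by auto
  have "P \<subseteq> {1..k}" using insert.prems by simp
  then have ih: "even (card (AJ J)) \<longleftrightarrow> even (card ?A)" by (rule insert.IH)
  show ?case unfolding ih red eq by (rule refl)
qed

end

context hkg1
begin

definition goodc :: "nat \<Rightarrow> bool" where
  "goodc p \<longleftrightarrow> (\<forall>y. 1 \<le> y \<and> y \<le> p \<longrightarrow> even (cc p choose y))"

lemma adm_fin: "adm V \<Longrightarrow> finite V"
  unfolding adm_def by (meson finite_atLeastAtMost finite_subset)

lemma Gp_adm: "adm Gp"
  using subgee_adm[OF kpos] subgee_iff Gp_sub set_le_refl by blast

lemma adm_down: "adm V \<Longrightarrow> U \<subseteq> V \<Longrightarrow> adm U"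
  using subgee_adm[OF kpos] subgee_down by blast

lemma adm_card_slot:
  assumes V: "adm V" and p: "p \<in> {1..k}"
  shows "card (V \<inter> Sl p) \<le> p"
proof -
  have "V \<inter> Sl p \<subseteq> {v\<in>V. bb p < v}" using Sl_thr1[OF p p] by auto
  then have "card (V \<inter> Sl p) \<le> card {v\<in>V. bb p < v}"
    by (rule card_mono[rotated]) (use adm_fin[OF V] in auto)
  also have "\<dots> \<le> p" using V p unfolding adm_def by auto
  finally show ?thesis .
qed

lemma adm_cardk:
  assumes V: "adm V"
  shows "card V \<le> k"
proof -
  have e: "{v\<in>V. bb k < v} = V" using V unfolding adm_def bb_def by auto
  have "k \<in> {1..k}" using kpos by simp
  then have "card {v\<in>V. bb k < v} \<le> k" using V unfolding adm_def by blast
  then show ?thesis unfolding e .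
qed

lemma small:
  assumes V: "adm V" and J: "J \<subseteq> {1..k}" "g ` J \<subseteq> V" and p: "p \<in> {1..k}"
  shows "card {j\<in>J. j \<le> p} + card (V \<inter> Sl p) \<le> p"
proof -
  have fV: "finite V" using adm_fin[OF V] .
  have s1: "g ` {j\<in>J. j \<le> p} \<subseteq> {v\<in>V. bb p < v}"
    using J gt_bb_iff[OF p] by auto
  have s2: "V \<inter> Sl p \<subseteq> {v\<in>V. bb p < v}" using Sl_thr1[OF p p] by auto
  have d: "g ` {j\<in>J. j \<le> p} \<inter> (V \<inter> Sl p) = {}" using Sl_Gp[OF p] J by auto
  have ci: "card (g ` {j\<in>J. j \<le> p}) = card {j\<in>J. j \<le> p}"
    by (rule card_image) (rule inj_on_subset[OF g_inj], use J in auto)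
  have "card (g ` {j\<in>J. j \<le> p} \<union> (V \<inter> Sl p)) = card (g ` {j\<in>J. j \<le> p}) + card (V \<inter> Sl p)"
    by (rule card_Un_disjoint) (use fV J d in \<open>auto intro: finite_subset\<close>)
  moreover have "card (g ` {j\<in>J. j \<le> p} \<union> (V \<inter> Sl p)) \<le> card {v\<in>V. bb p < v}"
    by (rule card_mono) (use fV s1 s2 in auto)
  moreover have "card {v\<in>V. bb p < v} \<le> p" using V p unfolding adm_def by auto
  ultimately show ?thesis using ci by linarith
qed

lemma sub_Gp_in:
  assumes "V \<subseteq> Gp" "g ` J \<subseteq> V"
  shows "V \<in> AJ J \<and> (\<forall>p\<in>{1..k}. goodV p V)"
proof -
  have "adm V" using adm_down[OF Gp_adm assms(1)] .
  moreover have "goodV p V" if p: "p \<in> {1..k}" for p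
  proof -
    have "V \<inter> Sl p = {}" using Sl_Gp[OF p] assms(1) by auto
    then show ?thesis unfolding goodV_def using cn0 by simp
  qed
  ultimately show ?thesis using assms unfolding AJ_def by auto
qed

lemma card_Gp_diff:
  assumes J: "J \<subseteq> {1..k}"
  shows "card (Gp - g ` J) = k - card J"
proof -
  have "card (g ` J) = card J"
    by (rule card_image) (rule inj_on_subset[OF g_inj J])
  moreover have "card (Gp - g ` J) = card Gp - card (g ` J)"
    by (rule card_Diff_subset) (use finite_subset[OF J finite_atLeastAtMost] J in auto)
  ultimately show ?thesis using card_Gp by simp
qed

lemma dir1:
  assumes good: "\<forall>p\<in>{1..k}. goodc p" and J: "J \<subseteq> {1..k}" and cJ: "card J < k"
  shows "even (card (AJ J))"
proof -
  have it: "even (card (AJ J)) \<longleftrightarrow> even (card {V\<in>AJ J. \<forall>p\<in>{1..k}. goodV p V})"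
    by (rule iter[OF J]) auto
  have eqF: "{V\<in>AJ J. \<forall>p\<in>{1..k}. goodV p V} = {V. g ` J \<subseteq> V \<and> V \<subseteq> Gp}"
  proof
    show "{V\<in>AJ J. \<forall>p\<in>{1..k}. goodV p V} \<subseteq> {V. g ` J \<subseteq> V \<and> V \<subseteq> Gp}"
    proof
      fix V assume V: "V \<in> {V\<in>AJ J. \<forall>p\<in>{1..k}. goodV p V}"
      then have aV: "adm V" and gJ: "g ` J \<subseteq> V" and gd: "\<forall>p\<in>{1..k}. goodV p V"
        unfolding AJ_def by auto
      have "V \<inter> Sl p = {}" if p: "p \<in> {1..k}" for p
      proof -
        have y: "card (V \<inter> Sl p) \<le> p" using adm_card_slot[OF aV p] .
        have o: "odd (cc p choose card (V \<inter> Sl p))" using gd p unfolding goodV_def by auto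
        have "card (V \<inter> Sl p) = 0"
        proof (rule ccontr)
          assume "card (V \<inter> Sl p) \<noteq> 0"
          then show False using good p y o unfolding goodc_def by auto
        qed
        then show ?thesis using adm_fin[OF aV] by simp
      qed
      then have "V \<subseteq> Gp" using adm_decomp[OF aV] by blast
      then show "V \<in> {V. g ` J \<subseteq> V \<and> V \<subseteq> Gp}" using gJ by simp
    qed
    show "{V. g ` J \<subseteq> V \<and> V \<subseteq> Gp} \<subseteq> {V\<in>AJ J. \<forall>p\<in>{1..k}. goodV p V}"
      using sub_Gp_in by blast
  qed
  have cb: "card {V. g ` J \<subseteq> V \<and> V \<subseteq> Gp} = 2 ^ card (Gp - g ` J)"
    by (rule card_between) (use J in auto)
  define c where "c = card (Gp - g ` J)"
  have "c \<noteq> 0" using card_Gp_diff[OF J] cJ unfolding c_def by simp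
  then have ev: "even ((2::nat) ^ c)" by (cases c) auto
  have "even (card {V\<in>AJ J. \<forall>p\<in>{1..k}. goodV p V})" unfolding eqF cb c_def[symmetric] by (rule ev)
  then show ?thesis using it by simp
qed

lemma dir2:
  assumes bad: "\<not> (\<forall>p\<in>{1..k}. goodc p)"
  shows "\<exists>J. J \<subseteq> {1..k} \<and> card J < k \<and> odd (card (AJ J))"
proof -
  define Y where "Y = {y. \<exists>p\<in>{1..k}. 1 \<le> y \<and> y \<le> p \<and> odd (cc p choose y)}"
  have Yne: "\<exists>y. y \<in> Y" using bad unfolding goodc_def Y_def by blast
  define ys where "ys = (LEAST y. y \<in> Y)"
  have ysY: "ys \<in> Y" unfolding ys_def using Yne by (metis LeastI)
  have ysmin: "ys \<le> y" if "y \<in> Y" for y unfolding ys_def using that by (rule Least_le)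
  define Ps where "Ps = {p\<in>{1..k}. ys \<le> p \<and> odd (cc p choose ys)}"
  have Psne: "Ps \<noteq> {}" "finite Ps" using ysY unfolding Ps_def Y_def by auto
  define i where "i = Max Ps"
  have iPs: "i \<in> Ps" unfolding i_def using Max_in[OF Psne(2,1)] .
  have imax: "p \<le> i" if "p \<in> Ps" for p unfolding i_def using Max_ge[OF Psne(2) that] .
  have i1: "i \<in> {1..k}" "ys \<le> i" "odd (cc i choose ys)" using iPs unfolding Ps_def by auto
  have ys1: "1 \<le> ys" using ysY unfolding Y_def by auto
  define blk where "blk = {i - ys<..i}"
  define J where "J = {1..k} - blk"
  have blk_sub: "blk \<subseteq> {1..k}" using i1 ys1 unfolding blk_def by auto
  have cblk: "card blk = ys" using i1 unfolding blk_def by simp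
  have J1: "J \<subseteq> {1..k}" unfolding J_def by auto
  have fblk: "finite blk" unfolding blk_def by simp
  have cJ: "card J = k - ys" unfolding J_def using card_Diff_subset[OF fblk blk_sub] cblk by simp
  have cJk: "card J < k" using cJ ys1 i1 by simp
  have cJq: "card {j\<in>J. j \<le> q} = q - (min q i - (i - ys))" if q: "q \<in> {1..k}" for q
  proof -
    have e: "{j\<in>J. j \<le> q} = {1..q} - {i - ys<..min q i}"
      unfolding J_def blk_def using q by auto
    have "{i - ys<..min q i} \<subseteq> {1..q}" using ys1 i1 by auto
    then have "card ({1..q} - {i - ys<..min q i}) = q - card {i - ys<..min q i}"
      using card_Diff_subset[of "{i - ys<..min q i}" "{1..q}"] by simp
    then show ?thesis unfolding e by simp
  qed
  have ysc: "ys \<le> card (Sl i)"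
  proof (rule ccontr)
    assume "\<not> ys \<le> card (Sl i)"
    then have "cc i < ys" unfolding card_Sl by simp
    then have "cc i choose ys = 0" by (rule binomial_eq_0)
    then have "even (cc i choose ys)" by (simp only: even_zero)
    then show False using i1(3) by (simp only: not_True_eq_False)
  qed
  have cni: "cn i ys \<subseteq> Sl i" "card (cn i ys) = ys" using cn_props[OF ysc] by auto
  define W0 where "W0 = g ` J \<union> cn i ys"
  have it: "even (card (AJ J)) \<longleftrightarrow> even (card {V\<in>AJ J. \<forall>p\<in>{1..k}. goodV p V})"
    by (rule iter[OF J1]) auto
  have eqF: "{V\<in>AJ J. \<forall>p\<in>{1..k}. goodV p V} = {V. g ` J \<subseteq> V \<and> V \<subseteq> Gp} \<union> {W0}"
  proof
    show "{V\<in>AJ J. \<forall>p\<in>{1..k}. goodV p V} \<subseteq> {V. g ` J \<subseteq> V \<and> V \<subseteq> Gp} \<union> {W0}"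
    proof
      fix V assume V: "V \<in> {V\<in>AJ J. \<forall>p\<in>{1..k}. goodV p V}"
      then have aV: "adm V" and gJ: "g ` J \<subseteq> V" and gd: "\<forall>p\<in>{1..k}. goodV p V"
        unfolding AJ_def by auto
      have fV: "finite V" using adm_fin[OF aV] .
      have bound: "card (V \<inter> Sl p) \<le> min p i - (i - ys)" if p: "p \<in> {1..k}" for p
        using small[OF aV J1 gJ p] cJq[OF p] by linarith
      have big: "ys \<le> card (V \<inter> Sl p)" if p: "p \<in> {1..k}" and nz: "card (V \<inter> Sl p) \<noteq> 0" for p
      proof -
        have "card (V \<inter> Sl p) \<in> Y" unfolding Y_def
          using p nz adm_card_slot[OF aV p] gd unfolding goodV_def by auto
        then show ?thesis by (rule ysmin)
      qed
      have z: "card (V \<inter> Sl p) = 0" if p: "p \<in> {1..k}" "p \<noteq> i" for p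
      proof (rule ccontr)
        assume nz: "card (V \<inter> Sl p) \<noteq> 0"
        have b1: "card (V \<inter> Sl p) \<le> min p i - (i - ys)" using bound p by auto
        have b2: "ys \<le> card (V \<inter> Sl p)" using big p nz by auto
        show False
        proof (cases "p < i")
          case True
          then have "min p i = p" by simp
          then show False using b1 b2 i1(2) ys1 True by arith
        next
          case False
          then have "i < p" using p by simp
          then have "min p i = i" by simp
          then have "card (V \<inter> Sl p) = ys" using b1 b2 i1(2) by arith
          then have "p \<in> Ps" using gd p \<open>i < p\<close> i1 unfolding goodV_def Ps_def by auto
          then show False using imax \<open>i < p\<close> by fastforce
        qed
      qed
      then have zs: "V \<inter> Sl p = {}" if "p \<in> {1..k}" "p \<noteq> i" for p using that fV by simp
      show "V \<in> {V. g ` J \<subseteq> V \<and> V \<subseteq> Gp} \<union> {W0}"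
      proof (cases "card (V \<inter> Sl i) = 0")
        case True
        then have "V \<inter> Sl i = {}" using fV by simp
        then have "V \<subseteq> Gp" using adm_decomp[OF aV] zs by blast
        then show ?thesis using gJ by simp
      next
        case False
        have "card (V \<inter> Sl i) \<le> ys" using bound[OF i1(1)] by simp
        then have cy: "card (V \<inter> Sl i) = ys" using big[OF i1(1) False] by simp
        then have Vi: "V \<inter> Sl i = cn i ys" using gd i1 unfolding goodV_def by auto
        have Vsub: "V \<subseteq> (V \<inter> Gp) \<union> (V \<inter> Sl i)" using adm_decomp[OF aV] zs by blast
        then have Veq: "V = (V \<inter> Gp) \<union> (V \<inter> Sl i)" by blast
        have "card V = card (V \<inter> Gp) + card (V \<inter> Sl i)"
          by (subst Veq, rule card_Un_disjoint) (use fV Sl_Gp[OF i1(1)] in auto)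
        then have "card (V \<inter> Gp) \<le> k - ys" using adm_cardk[OF aV] cy by simp
        moreover have "card (g ` J) = k - ys" using card_image[OF inj_on_subset[OF g_inj J1]] cJ by simp
        moreover have "g ` J \<subseteq> V \<inter> Gp" using gJ J1 by auto
        ultimately have "V \<inter> Gp = g ` J"
          using card_seteq[of "V \<inter> Gp" "g ` J"] fV by auto
        then have "V = W0" unfolding W0_def using Veq Vi by simp
        then show ?thesis by simp
      qed
    qed
    show "{V. g ` J \<subseteq> V \<and> V \<subseteq> Gp} \<union> {W0} \<subseteq> {V\<in>AJ J. \<forall>p\<in>{1..k}. goodV p V}"
    proof
      fix V assume "V \<in> {V. g ` J \<subseteq> V \<and> V \<subseteq> Gp} \<union> {W0}"
      then consider "g ` J \<subseteq> V" "V \<subseteq> Gp" | "V = W0" by auto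
      then show "V \<in> {V\<in>AJ J. \<forall>p\<in>{1..k}. goodV p V}"
      proof cases
        case 1
        then show ?thesis using sub_Gp_in by blast
      next
        case 2
        have gJG: "g ` J \<subseteq> Gp" using J1 by auto
        have a1: "W0 \<subseteq> {1..n-1}"
        proof
          fix v assume "v \<in> W0"
          then consider "v \<in> g ` J" | "v \<in> Sl i" unfolding W0_def using cni(1) by blast
          then show "v \<in> {1..n-1}"
          proof cases
            case 1
            then show ?thesis using gJG Gp_sub by blast
          next
            case 2
            then show ?thesis using Sl_bounds[OF i1(1) 2] by simp
          qed
        qed
        have a2: "\<forall>v\<in>W0. v \<le> g 1"
        proof
          fix v assume "v \<in> W0"
          then consider "v \<in> g ` J" | "v \<in> Sl i" unfolding W0_def using cni(1) by blast
          then show "v \<le> g 1"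
          proof cases
            case 1
            then obtain j where j: "j \<in> J" "v = g j" by blast
            then have "j \<in> {1..k}" using J1 by blast
            then show ?thesis using g_mono[of 1 j] j(2) by simp
          next
            case 2
            then show ?thesis using Sl_bounds[OF i1(1) 2] by simp
          qed
        qed
        have a3: "card {v\<in>W0. bb q < v} \<le> q" if q: "q \<in> {1..k}" for q
        proof -
          have e0: "{v\<in>W0. bb q < v} = {v\<in>g ` J. bb q < v} \<union> {v\<in>cn i ys. bb q < v}"
            unfolding W0_def by blast
          have e1: "{v\<in>g ` J. bb q < v} = g ` {j\<in>J. j \<le> q}"
          proof
            show "{v\<in>g ` J. bb q < v} \<subseteq> g ` {j\<in>J. j \<le> q}"
            proof
              fix v assume "v \<in> {v\<in>g ` J. bb q < v}"
              then obtain j where j: "j \<in> J" "v = g j" "bb q < g j" by blast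
              then have "j \<le> q" using gt_bb_iff[OF q] J1 by blast
              then show "v \<in> g ` {j\<in>J. j \<le> q}" using j by blast
            qed
            show "g ` {j\<in>J. j \<le> q} \<subseteq> {v\<in>g ` J. bb q < v}"
            proof
              fix v assume "v \<in> g ` {j\<in>J. j \<le> q}"
              then obtain j where j: "j \<in> J" "v = g j" "j \<le> q" by blast
              then have "bb q < g j" using gt_bb_iff[OF q] J1 by blast
              then show "v \<in> {v\<in>g ` J. bb q < v}" using j by blast
            qed
          qed
          have c1: "card (g ` {j\<in>J. j \<le> q}) \<le> card {j\<in>J. j \<le> q}"
            by (rule card_image_le) (use finite_subset[OF J1 finite_atLeastAtMost] in simp)
          have fcn: "finite (cn i ys)" unfolding cn_def by simp
          have "card {v\<in>W0. bb q < v} \<le> card {v\<in>g ` J. bb q < v} + card {v\<in>cn i ys. bb q < v}"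
            unfolding e0 by (rule card_Un_le)
          then have t: "card {v\<in>W0. bb q < v} \<le> card {j\<in>J. j \<le> q} + card {v\<in>cn i ys. bb q < v}"
            using c1 unfolding e1 by linarith
          show ?thesis
          proof (cases "i \<le> q")
            case True
            have "card {v\<in>cn i ys. bb q < v} \<le> card (cn i ys)"
              by (rule card_mono[OF fcn]) blast
            then have "card {v\<in>cn i ys. bb q < v} \<le> ys" using cni(2) by simp
            moreover have "min q i = i" using True by simp
            ultimately show ?thesis using t cJq[OF q] i1(2) True by arith
          next
            case False
            then have "\<forall>v\<in>cn i ys. \<not> bb q < v" using Sl_thr2[OF i1(1) q] cni(1) by force
            then have "{v\<in>cn i ys. bb q < v} = {}" by blast
            then have "card {v\<in>cn i ys. bb q < v} = 0" by (simp only: card.empty)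
            then show ?thesis using t cJq[OF q] by arith
          qed
        qed
        have adW: "adm W0" unfolding adm_def using a1 a2 a3 by blast
        have gdW: "goodV p W0" if p: "p \<in> {1..k}" for p
        proof (cases "p = i")
          case True
          have d1: "g ` J \<inter> Sl i = {}" using gJG Sl_Gp[OF i1(1)] by blast
          have "W0 \<inter> Sl i = cn i ys" unfolding W0_def using d1 cni(1) by blast
          then have "W0 \<inter> Sl p = cn p (card (W0 \<inter> Sl p)) \<and> odd (cc p choose card (W0 \<inter> Sl p))"
            using True cni(2) i1(3) by simp
          then show ?thesis unfolding goodV_def .
        next
          case False
          have d1: "g ` J \<inter> Sl p = {}" using gJG Sl_Gp[OF p] by blast
          have d2: "cn i ys \<inter> Sl p = {}" using cni(1) Sl_disj[OF p i1(1) False] by blast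
          have "W0 \<inter> Sl p = {}" unfolding W0_def using d1 d2 by blast
          then show ?thesis unfolding goodV_def using cn0 by simp
        qed
        show ?thesis using 2 adW gdW unfolding AJ_def W0_def by auto
      qed
    qed
  qed
  have W0n: "W0 \<notin> {V. g ` J \<subseteq> V \<and> V \<subseteq> Gp}"
  proof
    assume "W0 \<in> {V. g ` J \<subseteq> V \<and> V \<subseteq> Gp}"
    then have "cn i ys \<subseteq> Gp" unfolding W0_def by auto
    moreover have "cn i ys \<noteq> {}" using cni ys1 by auto
    ultimately show False using cni Sl_Gp[OF i1(1)] by blast
  qed
  have fL: "finite {V. g ` J \<subseteq> V \<and> V \<subseteq> Gp}" by (rule finite_subset[of _ "Pow Gp"]) auto
  have cb: "card {V. g ` J \<subseteq> V \<and> V \<subseteq> Gp} = 2 ^ card (Gp - g ` J)"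
    by (rule card_between) (use J1 in auto)
  have cd: "card (Gp - g ` J) = ys" using card_Gp_diff[OF J1] cJ i1 by simp
  have "card ({V. g ` J \<subseteq> V \<and> V \<subseteq> Gp} \<union> {W0}) = 2 ^ ys + 1"
    using card_insert_disjoint[OF fL W0n] cb cd by simp
  moreover have "even ((2::nat) ^ ys)" using ys1 by (cases ys) auto
  ultimately have "odd (card {V\<in>AJ J. \<forall>p\<in>{1..k}. goodV p V})" unfolding eqF by simp
  then have "odd (card (AJ J))" using it by simp
  then show ?thesis using J1 cJk by blast
qed

lemma comb:
  "(\<forall>J. J \<subseteq> {1..k} \<and> card J < k \<longrightarrow> even (card (AJ J))) \<longleftrightarrow> (\<forall>p\<in>{1..k}. goodc p)"
  using dir1 dir2 by blast

end

lemma choose_double_parity: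
  "even ((2*a) choose (2*j)) \<longleftrightarrow> even (a choose j)"
proof -
  define f where "f t = (a choose t) * (a choose (2*j - t))" for t
  have V: "(2*a) choose (2*j) = (\<Sum>t\<le>2*j. f t)"
    unfolding f_def using vandermonde[of a a "2*j"] by (simp add: mult_2)
  have split: "{..2*j} = {..<j} \<union> {j} \<union> {j<..2*j}" by auto
  have "(\<Sum>t\<le>2*j. f t) = (\<Sum>t\<in>{..<j}. f t) + f j + (\<Sum>t\<in>{j<..2*j}. f t)"
    unfolding split by (subst sum.union_disjoint, auto)+
  moreover have "(\<Sum>t\<in>{j<..2*j}. f t) = (\<Sum>t\<in>{..<j}. f t)"
  proof -
    have inj: "inj_on (\<lambda>t. 2*j - t) {..<j}" by (rule inj_onI) auto
    have im: "(\<lambda>t. 2*j - t) ` {..<j} = {j<..2*j}"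
    proof
      show "(\<lambda>t. 2*j - t) ` {..<j} \<subseteq> {j<..2*j}" by auto
      show "{j<..2*j} \<subseteq> (\<lambda>t. 2*j - t) ` {..<j}"
      proof
        fix x assume "x \<in> {j<..2*j}"
        then have "x = 2*j - (2*j - x)" "2*j - x \<in> {..<j}" by auto
        then show "x \<in> (\<lambda>t. 2*j - t) ` {..<j}" by blast
      qed
    qed
    have "(\<Sum>t\<in>{j<..2*j}. f t) = (\<Sum>t\<in>{..<j}. f (2*j - t))"
      using sum.reindex[OF inj, of f] im by simp
    also have "\<dots> = (\<Sum>t\<in>{..<j}. f t)"
      by (rule sum.cong) (auto simp: f_def)
    finally show ?thesis .
  qed
  ultimately have "(2*a) choose (2*j) = 2 * (\<Sum>t\<in>{..<j}. f t) + f j" using V by simp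
  moreover have "f j = (a choose j) * (a choose j)" unfolding f_def by (simp add: mult_2)
  ultimately show ?thesis by simp
qed

lemma odd_choose_pow: "odd u \<Longrightarrow> odd ((2^b * u) choose (2^b))"
proof (induction b)
  case 0
  then show ?case by simp
next
  case (Suc b)
  have "(2^Suc b * u) choose (2^Suc b) = (2 * (2^b * u)) choose (2 * 2^b)" by (simp add: mult.assoc)
  then show ?case using choose_double_parity[of "2^b * u" "2^b"] Suc by simp
qed

lemma pow2_decomp: "0 < (c::nat) \<Longrightarrow> \<exists>b u. c = 2^b * u \<and> odd u"
proof (induction c rule: less_induct)
  case (less c)
  show ?case
  proof (cases "odd c")
    case True
    then show ?thesis by (intro exI[of _ 0] exI[of _ c]) simp
  next
    case False
    then obtain c' where c': "c = 2 * c'" by blast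
    then have "0 < c'" "c' < c" using less.prems by auto
    then obtain b u where "c' = 2^b * u" "odd u" using less.IH by blast
    then show ?thesis using c' by (intro exI[of _ "Suc b"] exI[of _ u]) simp
  qed
qed

lemma even_choose_dvd:
  assumes d: "2^L dvd (c::nat)" and y: "1 \<le> y" "y < 2^L"
  shows "even (c choose y)"
proof (rule ccontr)
  assume o: "odd (c choose y)"
  have "y * (c choose y) = c * ((c - 1) choose (y - 1))"
    using times_binomial_minus1_eq[of y c] y by simp
  then have "(2::nat)^L dvd y * (c choose y)" using d by (metis dvd_mult2)
  moreover have "coprime ((2::nat)^L) (c choose y)" using o by simp
  ultimately have "(2::nat)^L dvd y" using coprime_dvd_mult_left_iff by blast
  then have "2^L \<le> y" using y by (intro dvd_imp_le) auto
  then show False using y by simp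
qed

lemma goodc_iff:
  assumes L: "2^(L-1) \<le> (p::nat)" "p < 2^L" "1 \<le> L"
  shows "(\<forall>y. 1 \<le> y \<and> y \<le> p \<longrightarrow> even (c choose y)) \<longleftrightarrow> 2^L dvd (c::nat)"
proof
  assume d: "2^L dvd c"
  show "\<forall>y. 1 \<le> y \<and> y \<le> p \<longrightarrow> even (c choose y)"
    using even_choose_dvd[OF d] L by auto
next
  assume h: "\<forall>y. 1 \<le> y \<and> y \<le> p \<longrightarrow> even (c choose y)"
  show "2^L dvd c"
  proof (rule ccontr)
    assume nd: "\<not> 2^L dvd c"
    then have "0 < c" by (metis dvd_0_right gr0I)
    then obtain b u where bu: "c = 2^b * u" "odd u" using pow2_decomp by blast
    have "b < L"
    proof (rule ccontr)
      assume "\<not> b < L"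
      then have "(2::nat)^L dvd 2^b" by (simp add: le_imp_power_dvd)
      then show False using nd bu by (metis dvd_mult2)
    qed
    then have pb: "(2::nat)^b \<le> 2^(L-1)" by (intro power_increasing) auto
    have "(2::nat)^b \<le> p" using order.trans[OF pb L(1)] .
    moreover have "1 \<le> (2::nat)^b" by simp
    ultimately have "even (c choose 2^b)" using h by blast
    then show False using odd_choose_pow[OF bu(2), of b] bu(1) by simp
  qed
qed

lemma lg_bounds:
  assumes p: "1 \<le> p"
  shows "2^(lg (2*p) - 1) \<le> p \<and> p < 2^lg (2*p) \<and> 1 \<le> lg (2*p)"
proof -
  obtain L where L: "2^L \<le> 2*p" "2*p < 2^(L+1)" using ex_power_ivl1[of 2 "2*p"] p by auto
  have "\<lfloor>log 2 (real (2*p))\<rfloor> = int L"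
    using floor_log_nat_eq_if[of 2 L "2*p"] L by simp
  then have lgL: "lg (2*p) = L" unfolding lg_def by simp
  have "L \<noteq> 0" using L(2) p by (cases L) auto
  then have "(2::nat)^L = 2 * 2^(L-1)" by (cases L) auto
  then show ?thesis using L lgL \<open>L \<noteq> 0\<close> by auto
qed

lemma mod_cond:
  assumes "2 \<le> (M::nat)"
  shows "(c + 1) mod M = 1 mod M \<longleftrightarrow> M dvd c"
  using mod_eq_dvd_iff_nat[of 1 "c + 1" M] by simp

theorem lemma4p8:
  fixes l :: "nat \<Rightarrow> real" and n m k :: nat and g :: "nat \<Rightarrow> nat"
  assumes "generic_length_vector l n"
    and "n = m + 3" and "n \<ge> 4"
    and "genetic_code l n = {insert n (g ` {1..k})}"
    and "\<forall>i\<in>{1..k}. 1 \<le> g i \<and> g i < n"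
    and "\<forall>i. 1 \<le> i \<and> i < k \<longrightarrow> g (i + 1) < g i"
  shows "(\<forall>J. J \<subseteq> {1..k} \<and> card J < k \<longrightarrow> HK_monomial_zero l n m (g ` J))
     \<longleftrightarrow> (\<forall>i\<in>{1..k}.
            (g i - (if i = k then 0 else g (i + 1))) mod 2 ^ lg (2 * i) = 1 mod 2 ^ lg (2 * i))"
proof -
  interpret H: hk l n m using assms(1,2) by unfold_locales
  show ?thesis
  proof (cases "k = 0")
    case True
    then show ?thesis by auto
  next
    case False
    interpret G: hkg1 l n m g k
      using assms False by unfold_locales auto
    have L: "HK_monomial_zero l n m (g ` J) \<longleftrightarrow> even (card (G.AJ J))" if J: "J \<subseteq> {1..k}" for J
    proof -
      have gJG: "g ` J \<subseteq> G.Gp" using J by auto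
      have "subgee l n G.Gp" using G.subgee_iff G.Gp_sub set_le_refl by blast
      then have sg: "subgee l n (g ` J)" using H.subgee_down gJG by blast
      have c: "card (g ` J) \<le> m" by (rule H.subgee_card[OF sg])
      have "g ` J \<subseteq> {1..n-1}" using G.Gp_sub gJG by blast
      then have "HK_monomial_zero l n m (g ` J) \<longleftrightarrow> even (card {V. subgee l n V \<and> g ` J \<subseteq> V})"
        unfolding HK_monomial_zero_def using H.span_iff c by blast
      also have "{V. subgee l n V \<and> g ` J \<subseteq> V} = G.AJ J"
        unfolding G.AJ_def using G.subgee_adm[OF G.kpos] by blast
      finally show ?thesis .
    qed
    have R: "G.goodc p \<longleftrightarrow>
        ((g p - (if p = k then 0 else g (p + 1))) mod 2 ^ lg (2 * p) = 1 mod 2 ^ lg (2 * p))"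
      if p: "p \<in> {1..k}" for p
    proof -
      have lb: "2^(lg (2*p) - 1) \<le> p" "p < 2^lg (2*p)" "1 \<le> lg (2*p)"
        using lg_bounds[of p] p by auto
      have g1: "G.goodc p \<longleftrightarrow> 2^lg (2*p) dvd G.cc p"
        unfolding G.goodc_def by (rule goodc_iff[OF lb])
      have "G.bb p < g p" using G.bb_lt[OF p] .
      then have e: "g p - (if p = k then 0 else g (p + 1)) = G.cc p + 1"
        unfolding G.cc_def G.bb_def by simp
      have M: "2 \<le> (2::nat)^lg (2*p)"
        using lb(3) by (metis power_one_right power_increasing one_le_numeral)
      show ?thesis unfolding e g1 using mod_cond[OF M] by simp
    qed
    have "(\<forall>J. J \<subseteq> {1..k} \<and> card J < k \<longrightarrow> HK_monomial_zero l n m (g ` J))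
        \<longleftrightarrow> (\<forall>J. J \<subseteq> {1..k} \<and> card J < k \<longrightarrow> even (card (G.AJ J)))"
      using L by blast
    also have "\<dots> \<longleftrightarrow> (\<forall>p\<in>{1..k}. G.goodc p)" by (rule G.comb)
    also have "\<dots> \<longleftrightarrow> (\<forall>i\<in>{1..k}.
            (g i - (if i = k then 0 else g (i + 1))) mod 2 ^ lg (2 * i) = 1 mod 2 ^ lg (2 * i))"
      using R by blast
    finally show ?thesis .
  qed
qed

end
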